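(* Every maximal (with respect to inclusion) $\boldsymbol\pi$-clique in $\mathcal L$ is either a flat or a semibundle $\mathcal L_U(X)$, where $X$ is a maximal strong subspace of $\mathfrak M$ and $U\in\overline X$.
   Context: Setup. Let $V$ be a vector space of finite dimension $n\ge 3$ over a division ring; $\mathrm{Sub}_j(V)$ is the set of $j$-dimensional subspaces of $V$. Fix $k$ with $1<k<n-1$, a subspace $W$ of $V$ with $w:=\dim W$, and an integer $m$ with $k-(n-w)\le m\le\min\{k,w\}$. For $H\in\mathrm{Sub}_{k-1}(V)$, $B\in\mathrm{Sub}_{k+1}(V)$, $H\subset B$, the $k$-pencil is $\mathbf p(H,B)=\{U\in\mathrm{Sub}_k(V):H\subset U\subset B\}$; the Grassmann space $\mathbf P_k(V)$ has points $\mathrm{Sub}_k(V)$ and lines the $k$-pencils. The spine space $\mathfrak M$ has point set $S=\{U\in\mathrm{Sub}_k(V):\dim(U\cap W)=m\}$ and line set $\mathcal L=\{\ell\cap S:\ell\text{ a $k$-pencil},\ |\ell\cap S|\ge2\}$; points of $\mathrm{Sub}_k(V)\setminus S$ are improper. Each $L\in\mathcal L$ lies in a unique $k$-pencil $\overline L$. A subspace of $\mathfrak M$ is a set $X\subseteq S$ containing every line meeting it in at least two points; it is strong if its points are pairwise collinear; $\overline X$ is the smallest subspace of $\mathbf P_k(V)$ containing $X$. A plane of $\mathbf P_k(V)$ is a set $\{U\in\mathrm{Sub}_k(V):Y\subset U\subset Z\}$ with $(\dim Y,\dim Z)=(k-2,k+1)$ or $(k-1,k+2)$; a plane of $\mathfrak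 M$ is $E=P\cap S$ with $P$ a plane of $\mathbf P_k(V)$, containing two distinct lines. $L_1\,\boldsymbol\pi\,L_2$ iff some plane of $\mathfrak M$ contains both. A $\boldsymbol\pi$-clique is a set of lines pairwise $\boldsymbol\pi$-related. A flat is $\mathcal L(E)=\{L\in\mathcal L:L\subseteq E\}$ for a plane $E$. For a strong subspace $X$ and $U\in\overline X$, the semibundle is $\mathcal L_U(X)=\{L\in\mathcal L:U\in\overline L,\ L\subseteq X\}$. *)

theory Defs
  imports Main "HOL-Library.Function_Algebras"
begin

text \<open>Vectors are coordinate functions nat => D vanishing from index n on;
 scalars act from the left.\<close>

definition vecs :: "nat \<Rightarrow> (nat \<Rightarrow> 'a::division_ring) set" where
  "vecs n = {v. \<forall>i\<ge>n. v i = 0}"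

definition smult :: "'a::division_ring \<Rightarrow> (nat \<Rightarrow> 'a) \<Rightarrow> (nat \<Rightarrow> 'a)" where
  "smult c v = (\<lambda>i. c * v i)"

definition lsubspace :: "nat \<Rightarrow> (nat \<Rightarrow> 'a::division_ring) set \<Rightarrow> bool" where
  "lsubspace n U \<longleftrightarrow> U \<subseteq> vecs n \<and> 0 \<in> U \<and> (\<forall>x\<in>U. \<forall>y\<in>U. x + y \<in> U)
     \<and> (\<forall>c. \<forall>x\<in>U. smult c x \<in> U)"

definition lin_indep :: "(nat \<Rightarrow> 'a::division_ring) set \<Rightarrow> bool" where
  "lin_indep B \<longleftrightarrow> (\<forall>F c. finite F \<and> F \<subseteq> B \<and> (\<Sum>s\<in>F. smult (c s) s) = 0 \<longrightarrow> (\<forall>s\<in>F. c s = 0))"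

definition ldim :: "(nat \<Rightarrow> 'a::division_ring) set \<Rightarrow> nat" where
  "ldim U = Max (card ` {B. finite B \<and> B \<subseteq> U \<and> lin_indep B})"

definition Sub :: "nat \<Rightarrow> nat \<Rightarrow> (nat \<Rightarrow> 'a::division_ring) set set" where
  "Sub n j = {U. lsubspace n U \<and> ldim U = j}"

definition pencil :: "nat \<Rightarrow> nat \<Rightarrow> (nat \<Rightarrow> 'a::division_ring) set \<Rightarrow> (nat \<Rightarrow> 'a) set
    \<Rightarrow> (nat \<Rightarrow> 'a) set set" where
  "pencil n k H B = {U \<in> Sub n k. H \<subseteq> U \<and> U \<subseteq> B}"

definition is_pencil :: "nat \<Rightarrow> nat \<Rightarrow> (nat \<Rightarrow> 'a::division_ring) set set \<Rightarrow> bool" where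
  "is_pencil n k l \<longleftrightarrow> (\<exists>H B. H \<in> Sub n (k - 1) \<and> B \<in> Sub n (k + 1) \<and> H \<subseteq> B
      \<and> l = pencil n k H B)"

definition two_pts :: "'b set \<Rightarrow> bool" where
  "two_pts A \<longleftrightarrow> (\<exists>x y. x \<in> A \<and> y \<in> A \<and> x \<noteq> y)"

definition grass_subspace :: "nat \<Rightarrow> nat \<Rightarrow> (nat \<Rightarrow> 'a::division_ring) set set \<Rightarrow> bool" where
  "grass_subspace n k Y \<longleftrightarrow> Y \<subseteq> Sub n k \<and>
     (\<forall>l. is_pencil n k l \<and> two_pts (l \<inter> Y) \<longrightarrow> l \<subseteq> Y)"

definition grass_closure :: "nat \<Rightarrow> nat \<Rightarrow> (nat \<Rightarrow> 'a::division_ring) set set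
    \<Rightarrow> (nat \<Rightarrow> 'a) set set" where
  "grass_closure n k X = \<Inter>{Y. grass_subspace n k Y \<and> X \<subseteq> Y}"

definition grass_plane :: "nat \<Rightarrow> nat \<Rightarrow> (nat \<Rightarrow> 'a::division_ring) set set \<Rightarrow> bool" where
  "grass_plane n k P \<longleftrightarrow> (\<exists>Y Z. lsubspace n Y \<and> lsubspace n Z \<and> Y \<subseteq> Z \<and>
     ((ldim Y = k - 2 \<and> ldim Z = k + 1) \<or> (ldim Y = k - 1 \<and> ldim Z = k + 2)) \<and>
     P = {U \<in> Sub n k. Y \<subseteq> U \<and> U \<subseteq> Z})"

definition spoints :: "nat \<Rightarrow> nat \<Rightarrow> (nat \<Rightarrow> 'a::division_ring) set \<Rightarrow> nat
    \<Rightarrow> (nat \<Rightarrow> 'a) set set" where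
  "spoints n k W m = {U \<in> Sub n k. ldim (U \<inter> W) = m}"

definition slines :: "nat \<Rightarrow> nat \<Rightarrow> (nat \<Rightarrow> 'a::division_ring) set \<Rightarrow> nat
    \<Rightarrow> (nat \<Rightarrow> 'a) set set set" where
  "slines n k W m = {l \<inter> spoints n k W m | l. is_pencil n k l \<and> two_pts (l \<inter> spoints n k W m)}"

definition pencil_of :: "nat \<Rightarrow> nat \<Rightarrow> (nat \<Rightarrow> 'a::division_ring) set set
    \<Rightarrow> (nat \<Rightarrow> 'a) set set" where
  "pencil_of n k L = (THE l. is_pencil n k l \<and> L \<subseteq> l)"

definition spine_subspace :: "nat \<Rightarrow> nat \<Rightarrow> (nat \<Rightarrow> 'a::division_ring) set \<Rightarrow> nat
    \<Rightarrow> (nat \<Rightarrow> 'a) set set \<Rightarrow> bool" where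
  "spine_subspace n k W m X \<longleftrightarrow> X \<subseteq> spoints n k W m \<and>
     (\<forall>L \<in> slines n k W m. two_pts (L \<inter> X) \<longrightarrow> L \<subseteq> X)"

definition strong_subspace :: "nat \<Rightarrow> nat \<Rightarrow> (nat \<Rightarrow> 'a::division_ring) set \<Rightarrow> nat
    \<Rightarrow> (nat \<Rightarrow> 'a) set set \<Rightarrow> bool" where
  "strong_subspace n k W m X \<longleftrightarrow> spine_subspace n k W m X \<and>
     (\<forall>U\<in>X. \<forall>U'\<in>X. U \<noteq> U' \<longrightarrow> (\<exists>L \<in> slines n k W m. U \<in> L \<and> U' \<in> L))"

definition max_strong_subspace :: "nat \<Rightarrow> nat \<Rightarrow> (nat \<Rightarrow> 'a::division_ring) set \<Rightarrow> nat
    \<Rightarrow> (nat \<Rightarrow> 'a) set set \<Rightarrow> bool" where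
  "max_strong_subspace n k W m X \<longleftrightarrow> strong_subspace n k W m X \<and>
     (\<forall>X'. strong_subspace n k W m X' \<and> X \<subseteq> X' \<longrightarrow> X' = X)"

definition spine_plane :: "nat \<Rightarrow> nat \<Rightarrow> (nat \<Rightarrow> 'a::division_ring) set \<Rightarrow> nat
    \<Rightarrow> (nat \<Rightarrow> 'a) set set \<Rightarrow> bool" where
  "spine_plane n k W m E \<longleftrightarrow> (\<exists>P. grass_plane n k P \<and> E = P \<inter> spoints n k W m) \<and>
     (\<exists>L1 L2. L1 \<in> slines n k W m \<and> L2 \<in> slines n k W m \<and> L1 \<noteq> L2 \<and> L1 \<subseteq> E \<and> L2 \<subseteq> E)"

definition pi_rel :: "nat \<Rightarrow> nat \<Rightarrow> (nat \<Rightarrow> 'a::division_ring) set \<Rightarrow> nat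
    \<Rightarrow> (nat \<Rightarrow> 'a) set set \<Rightarrow> (nat \<Rightarrow> 'a) set set \<Rightarrow> bool" where
  "pi_rel n k W m L1 L2 \<longleftrightarrow> (\<exists>E. spine_plane n k W m E \<and> L1 \<subseteq> E \<and> L2 \<subseteq> E)"

definition pi_clique :: "nat \<Rightarrow> nat \<Rightarrow> (nat \<Rightarrow> 'a::division_ring) set \<Rightarrow> nat
    \<Rightarrow> (nat \<Rightarrow> 'a) set set set \<Rightarrow> bool" where
  "pi_clique n k W m K \<longleftrightarrow> K \<subseteq> slines n k W m \<and>
     (\<forall>L1\<in>K. \<forall>L2\<in>K. L1 \<noteq> L2 \<longrightarrow> pi_rel n k W m L1 L2)"

definition max_pi_clique :: "nat \<Rightarrow> nat \<Rightarrow> (nat \<Rightarrow> 'a::division_ring) set \<Rightarrow> nat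
    \<Rightarrow> (nat \<Rightarrow> 'a) set set set \<Rightarrow> bool" where
  "max_pi_clique n k W m K \<longleftrightarrow> pi_clique n k W m K \<and>
     (\<forall>K'. pi_clique n k W m K' \<and> K \<subseteq> K' \<longrightarrow> K' = K)"

definition flat :: "nat \<Rightarrow> nat \<Rightarrow> (nat \<Rightarrow> 'a::division_ring) set \<Rightarrow> nat
    \<Rightarrow> (nat \<Rightarrow> 'a) set set \<Rightarrow> (nat \<Rightarrow> 'a) set set set" where
  "flat n k W m E = {L \<in> slines n k W m. L \<subseteq> E}"

definition semibundle :: "nat \<Rightarrow> nat \<Rightarrow> (nat \<Rightarrow> 'a::division_ring) set \<Rightarrow> nat
    \<Rightarrow> (nat \<Rightarrow> 'a) set \<Rightarrow> (nat \<Rightarrow> 'a) set set \<Rightarrow> (nat \<Rightarrow> 'a) set set set" where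
  "semibundle n k W m U X = {L \<in> slines n k W m. U \<in> pencil_of n k L \<and> L \<subseteq> X}"

end

theory Submission
  imports Defs
begin


lemma smult_apply[simp]: "smult c v i = c * v i" by (simp add: smult_def)
lemma smult_zero_v[simp]: "smult c 0 = 0" by (simp add: fun_eq_iff)
lemma smult_zero_s[simp]: "smult 0 v = 0" by (simp add: fun_eq_iff)
lemma smult_one[simp]: "smult 1 v = v" by (simp add: fun_eq_iff)
lemma smult_add: "smult c (v + w) = smult c v + smult c w" by (simp add: fun_eq_iff algebra_simps)
lemma smult_add2: "smult (c + d) v = smult c v + smult d v" by (simp add: fun_eq_iff algebra_simps)
lemma smult_diff: "smult c (v - w) = smult c v - smult c w" by (simp add: fun_eq_iff algebra_simps)
lemma smult_diff2: "smult (c - d) v = smult c v - smult d v" by (simp add: fun_eq_iff algebra_simps)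
lemma smult_smult[simp]: "smult c (smult d v) = smult (c * d) v" by (simp add: fun_eq_iff algebra_simps)
lemma smult_neg: "smult (- c) v = - smult c v" by (simp add: fun_eq_iff)

lemma sum_fun_apply: "(sum f F) i = sum (\<lambda>s. f s i) F"
  by (induction F rule: infinite_finite_induct) auto

lemma smult_sum: "smult c (sum f F) = sum (\<lambda>s. smult c (f s)) F"
  by (simp add: fun_eq_iff sum_fun_apply sum_distrib_left)

lemma lsubD:
  assumes "lsubspace n U"
  shows "U \<subseteq> vecs n" "0 \<in> U" "\<And>x y. x \<in> U \<Longrightarrow> y \<in> U \<Longrightarrow> x + y \<in> U"
    "\<And>c x. x \<in> U \<Longrightarrow> smult c x \<in> U"
  using assms unfolding lsubspace_def by auto

lemma lsub_neg: "lsubspace n U \<Longrightarrow> x \<in> U \<Longrightarrow> - x \<in> U"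
  using lsubD(4)[of n U x "-1"] by (simp add: smult_neg)

lemma lsub_diff: "lsubspace n U \<Longrightarrow> x \<in> U \<Longrightarrow> y \<in> U \<Longrightarrow> x - y \<in> U"
  using lsubD(3)[of n U x "-y"] lsub_neg[of n U y] by simp

lemma lsub_sum: "lsubspace n U \<Longrightarrow> (\<And>s. s \<in> F \<Longrightarrow> f s \<in> U) \<Longrightarrow> sum f F \<in> U"
  by (induction F rule: infinite_finite_induct) (auto intro: lsubD)

lemma vecs_lsub: "lsubspace n (vecs n)"
  unfolding lsubspace_def vecs_def by auto

lemma lsub_Int: "lsubspace n A \<Longrightarrow> lsubspace n B \<Longrightarrow> lsubspace n (A \<inter> B)"
  unfolding lsubspace_def by auto

definition ssum :: "(nat \<Rightarrow> 'a::division_ring) set \<Rightarrow> (nat \<Rightarrow> 'a) set \<Rightarrow> (nat \<Rightarrow> 'a) set" where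
  "ssum A B = {a + b | a b. a \<in> A \<and> b \<in> B}"

definition sp1 :: "(nat \<Rightarrow> 'a::division_ring) \<Rightarrow> (nat \<Rightarrow> 'a) set" where
  "sp1 x = {smult t x | t. True}"

lemma ssumI: "a \<in> A \<Longrightarrow> b \<in> B \<Longrightarrow> a + b \<in> ssum A B"
  unfolding ssum_def by blast

lemma ssumE: "x \<in> ssum A B \<Longrightarrow> (\<And>a b. x = a + b \<Longrightarrow> a \<in> A \<Longrightarrow> b \<in> B \<Longrightarrow> P) \<Longrightarrow> P"
  unfolding ssum_def by blast

lemma lsub_ssum: assumes "lsubspace n A" "lsubspace n B" shows "lsubspace n (ssum A B)"
proof -
  have "ssum A B \<subseteq> vecs n"
    using lsubD(1)[OF assms(1)] lsubD(1)[OF assms(2)] unfolding ssum_def vecs_def by fastforce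
  moreover have "0 \<in> ssum A B" using ssumI[OF lsubD(2)[OF assms(1)] lsubD(2)[OF assms(2)]] by simp
  moreover have "x + y \<in> ssum A B" if hx: "x \<in> ssum A B" and hy: "y \<in> ssum A B" for x y
  proof -
    obtain a b where "x = a + b" "a \<in> A" "b \<in> B" using hx by (blast elim: ssumE)
    moreover obtain a' b' where "y = a' + b'" "a' \<in> A" "b' \<in> B" using hy by (blast elim: ssumE)
    ultimately have "x + y = (a + a') + (b + b')" "a + a' \<in> A" "b + b' \<in> B"
      using lsubD(3)[OF assms(1)] lsubD(3)[OF assms(2)] by (auto simp: algebra_simps)
    thus ?thesis unfolding ssum_def by blast
  qed
  moreover have "smult c x \<in> ssum A B" if hx: "x \<in> ssum A B" for c x
  proof -
    obtain a b where "x = a + b" "a \<in> A" "b \<in> B" using hx by (blast elim: ssumE)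
    hence "smult c x = smult c a + smult c b" "smult c a \<in> A" "smult c b \<in> B"
      using lsubD(4)[OF assms(1)] lsubD(4)[OF assms(2)] by (auto simp: smult_add)
    thus ?thesis unfolding ssum_def by blast
  qed
  ultimately show ?thesis unfolding lsubspace_def by blast
qed

lemma lsub_sp1: assumes "x \<in> vecs n" shows "lsubspace n (sp1 x)"
proof -
  have "sp1 x \<subseteq> vecs n" using assms by (auto simp: sp1_def vecs_def)
  moreover have "0 \<in> sp1 x" unfolding sp1_def by (rule CollectI, rule exI[of _ 0]) simp
  moreover have "a + b \<in> sp1 x" if "a \<in> sp1 x" "b \<in> sp1 x" for a b
    using that unfolding sp1_def by (auto simp: smult_add2[symmetric])
  moreover have "smult c a \<in> sp1 x" if "a \<in> sp1 x" for c a
    using that unfolding sp1_def by auto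
  ultimately show ?thesis unfolding lsubspace_def by blast
qed

lemma ssum_mono: "A \<subseteq> A' \<Longrightarrow> B \<subseteq> B' \<Longrightarrow> ssum A B \<subseteq> ssum A' B'"
  unfolding ssum_def by blast

lemma ssum_left: "lsubspace n B \<Longrightarrow> A \<subseteq> ssum A B"
  unfolding ssum_def using lsubD(2) by (metis (mono_tags, lifting) CollectI add.right_neutral subsetI)

lemma ssum_right: "lsubspace n A \<Longrightarrow> B \<subseteq> ssum A B"
  unfolding ssum_def using lsubD(2) by (metis (mono_tags, lifting) CollectI add_0 subsetI)

lemma ssum_sub: "lsubspace n C \<Longrightarrow> A \<subseteq> C \<Longrightarrow> B \<subseteq> C \<Longrightarrow> ssum A B \<subseteq> C"
  unfolding ssum_def using lsubD(3) by blast

lemma sp1_self: "x \<in> sp1 x" unfolding sp1_def by (rule CollectI, rule exI[of _ 1]) simp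

lemma sp1_sub: "lsubspace n C \<Longrightarrow> x \<in> C \<Longrightarrow> sp1 x \<subseteq> C"
  unfolding sp1_def using lsubD(4) by blast

lemma smult_sum2: "smult (sum a F) v = sum (\<lambda>s. smult (a s) v) F"
  by (simp add: fun_eq_iff sum_fun_apply sum_distrib_right)

definition ibound :: "(nat \<Rightarrow> 'a::division_ring) set \<Rightarrow> nat \<Rightarrow> bool" where
  "ibound A d \<longleftrightarrow> (\<forall>I. finite I \<and> I \<subseteq> A \<and> lin_indep I \<longrightarrow> card I \<le> d)"

lemma lin_indepD: "lin_indep I \<Longrightarrow> finite F \<Longrightarrow> F \<subseteq> I \<Longrightarrow> (\<Sum>s\<in>F. smult (c s) s) = 0
   \<Longrightarrow> s \<in> F \<Longrightarrow> c s = 0"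
  unfolding lin_indep_def by blast

lemma ibound_mono: "ibound B d \<Longrightarrow> A \<subseteq> B \<Longrightarrow> ibound A d"
  unfolding ibound_def by blast

lemma ibound_step:
  assumes A: "lsubspace n A" and bd: "ibound A d"
  shows "ibound (ssum A (sp1 x)) (Suc d)"
  unfolding ibound_def
proof (intro allI impI, elim conjE)
  fix I assume fin: "finite I" and IS: "I \<subseteq> ssum A (sp1 x)" and ind: "lin_indep I"
  show "card I \<le> Suc d"
  proof (cases "I \<subseteq> A")
    case True thus ?thesis using bd fin ind unfolding ibound_def by fastforce
  next
    case False
    then obtain v0 where v0I: "v0 \<in> I" and v0A: "v0 \<notin> A" by blast
    define tt where "tt v = (SOME t. v - smult t x \<in> A)" for v
    have tt: "v - smult (tt v) x \<in> A" if vI: "v \<in> I" for v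
    proof -
      obtain a b where "v = a + b" "a \<in> A" "b \<in> sp1 x" using IS vI by (blast elim: ssumE)
      then obtain t where "b = smult t x" unfolding sp1_def by auto
      hence "v - smult t x \<in> A" using \<open>v = a + b\<close> \<open>a \<in> A\<close> by simp
      thus ?thesis unfolding tt_def by (rule someI)
    qed
    define t0 where "t0 = tt v0"
    have t0: "t0 \<noteq> 0"
    proof
      assume "t0 = 0"
      hence "v0 \<in> A" using tt[OF v0I] unfolding t0_def by simp
      thus False using v0A by simp
    qed
    define g where "g v = v - smult (tt v * inverse t0) v0" for v
    have geq: "g v = (v - smult (tt v) x) - smult (tt v * inverse t0) (v0 - smult t0 x)" for v
    proof -
      have h: "inverse t0 * (t0 * y) = y" for y using t0 by (simp add: mult.assoc[symmetric])
      show ?thesis unfolding g_def by (simp add: fun_eq_iff algebra_simps h)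
    qed
    have gA: "g v \<in> A" if "v \<in> I" for v
      unfolding geq using tt[OF that] tt[OF v0I] unfolding t0_def
      by (meson lsub_diff[OF A] lsubD(4)[OF A])
    have ginj: "inj_on g (I - {v0})"
    proof (rule inj_onI, rule ccontr)
      fix v w assume v: "v \<in> I - {v0}" and w: "w \<in> I - {v0}" and e: "g v = g w" and ne: "v \<noteq> w"
      define c where "c u = (if u = v then 1 else if u = w then -1 else - (tt v * inverse t0 - tt w * inverse t0))" for u
      have "(\<Sum>s\<in>{v, w, v0}. smult (c s) s) = v - w - smult (tt v * inverse t0 - tt w * inverse t0) v0"
      proof -
        have "v \<noteq> v0" "w \<noteq> v0" using v w by auto
        thus ?thesis using ne unfolding c_def by (simp add: smult_neg smult_diff2 algebra_simps)
      qed
      also have "\<dots> = 0" using e unfolding g_def by (simp add: smult_diff2 algebra_simps)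
      finally have "c v = 0" using ind v w v0I by (intro lin_indepD[OF ind, of "{v, w, v0}"]) auto
      thus False unfolding c_def by simp
    qed
    have Jind: "lin_indep (g ` (I - {v0}))"
      unfolding lin_indep_def
    proof (intro allI impI, elim conjE)
      fix F c assume finF: "finite F" and FJ: "F \<subseteq> g ` (I - {v0})" and sF: "(\<Sum>s\<in>F. smult (c s) s) = 0"
      define F' where "F' = {v \<in> I - {v0}. g v \<in> F}"
      have finF': "finite F'" using fin unfolding F'_def by auto
      have FF': "F = g ` F'" using FJ unfolding F'_def by auto
      have injF': "inj_on g F'" using ginj unfolding F'_def by (rule inj_on_subset) auto
      have v0F': "v0 \<notin> F'" unfolding F'_def by auto
      define c' where "c' u = (if u = v0 then - (\<Sum>v\<in>F'. c (g v) * (tt v * inverse t0)) else c (g u))" for u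
      have "0 = (\<Sum>s\<in>F. smult (c s) s)" using sF by simp
      also have "\<dots> = (\<Sum>v\<in>F'. smult (c (g v)) (g v))"
        unfolding FF' by (simp add: sum.reindex[OF injF'])
      also have "\<dots> = (\<Sum>v\<in>F'. smult (c (g v)) v - smult (c (g v) * (tt v * inverse t0)) v0)"
        unfolding g_def by (simp add: smult_diff)
      also have "\<dots> = (\<Sum>v\<in>F'. smult (c (g v)) v) - smult (\<Sum>v\<in>F'. c (g v) * (tt v * inverse t0)) v0"
        by (simp add: sum_subtractf smult_sum2)
      also have "\<dots> = (\<Sum>v\<in>insert v0 F'. smult (c' v) v)"
      proof -
        have "(\<Sum>v\<in>F'. smult (c' v) v) = (\<Sum>v\<in>F'. smult (c (g v)) v)"
          using v0F' unfolding c'_def by (intro sum.cong) auto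
        thus ?thesis using finF' v0F' unfolding c'_def by (simp add: smult_neg)
      qed
      finally have z: "(\<Sum>v\<in>insert v0 F'. smult (c' v) v) = 0" by simp
      show "\<forall>s\<in>F. c s = 0"
      proof
        fix s assume "s \<in> F"
        then obtain v where vF': "v \<in> F'" and sv: "s = g v" unfolding FF' by blast
        have "c' v = 0" using lin_indepD[OF ind _ _ z, of v] finF' vF' v0I unfolding F'_def by auto
        thus "c s = 0" using vF' v0F' sv unfolding c'_def by (auto split: if_splits)
      qed
    qed
    have "card (g ` (I - {v0})) \<le> d"
      using bd Jind gA fin unfolding ibound_def by blast
    hence "card (I - {v0}) \<le> d" using card_image[OF ginj] by simp
    thus ?thesis using fin v0I by (simp add: card_Diff_singleton)
  qed
qed



lemma lin_indep_empty: "lin_indep {}" unfolding lin_indep_def by auto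

lemma ibound_zero: "ibound {0::nat\<Rightarrow>'a::division_ring} 0"
  unfolding ibound_def
proof (intro allI impI, elim conjE)
  fix I :: "(nat \<Rightarrow> 'a) set" assume "finite I" "I \<subseteq> {0}" "lin_indep I"
  have "0 \<notin> I"
  proof
    assume h: "0 \<in> I"
    have "(\<lambda>_. 1::'a) 0 = 0" by (rule lin_indepD[OF \<open>lin_indep I\<close>, of "{0}"]) (use h in auto)
    thus False by simp
  qed
  hence "I = {}" using \<open>I \<subseteq> {0}\<close> by auto
  thus "card I \<le> 0" by simp
qed

definition evec :: "nat \<Rightarrow> nat \<Rightarrow> 'a::division_ring" where
  "evec j = (\<lambda>i. if i = j then 1 else 0)"

lemma vecs_Suc: "vecs (Suc n) \<subseteq> ssum (vecs n) (sp1 (evec n))"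
proof
  fix v :: "nat \<Rightarrow> 'a" assume v: "v \<in> vecs (Suc n)"
  have "v = (\<lambda>i. if i = n then 0 else v i) + smult (v n) (evec n)"
    by (simp add: fun_eq_iff evec_def)
  moreover have "(\<lambda>i. if i = n then 0 else v i) \<in> vecs n" using v by (auto simp: vecs_def)
  moreover have "smult (v n) (evec n) \<in> sp1 (evec n)" unfolding sp1_def by blast
  ultimately show "v \<in> ssum (vecs n) (sp1 (evec n))" by (metis ssumI)
qed

lemma vecs_0: "vecs 0 = {0}" by (auto simp: vecs_def fun_eq_iff)

lemma ibound_vecs: "ibound (vecs n :: (nat \<Rightarrow> 'a::division_ring) set) n"
proof (induction n)
  case 0 thus ?case using ibound_zero vecs_0 by metis
next
  case (Suc n)
  show ?case by (rule ibound_mono[OF ibound_step[OF vecs_lsub Suc] vecs_Suc])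
qed

definition icards :: "(nat \<Rightarrow> 'a::division_ring) set \<Rightarrow> nat set" where
  "icards A = card ` {B. finite B \<and> B \<subseteq> A \<and> lin_indep B}"

lemma icards: assumes "A \<subseteq> vecs n" shows "finite (icards A)" "icards A \<noteq> {}"
proof -
  have "icards A \<subseteq> {..n}" using ibound_vecs[of n] assms unfolding icards_def ibound_def by force
  thus "finite (icards A)" using finite_subset by blast
  show "icards A \<noteq> {}" unfolding icards_def using lin_indep_empty by blast
qed

lemma ldim_icards: "ldim A = Max (icards A)" unfolding ldim_def icards_def by simp

lemma ldim_ge: "A \<subseteq> vecs n \<Longrightarrow> finite I \<Longrightarrow> I \<subseteq> A \<Longrightarrow> lin_indep I \<Longrightarrow> card I \<le> ldim A"
  unfolding ldim_icards by (rule Max_ge[OF icards(1)]) (auto simp: icards_def)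

lemma ldim_ex: assumes "A \<subseteq> vecs n" obtains I where "finite I" "I \<subseteq> A" "lin_indep I" "card I = ldim A"
proof -
  have "ldim A \<in> icards A" unfolding ldim_icards by (rule Max_in[OF icards[OF assms]])
  thus ?thesis using that unfolding icards_def by auto
qed

lemma ldim_bound: assumes "A \<subseteq> vecs n" "ibound A d" shows "ldim A \<le> d"
proof -
  obtain I where "finite I" "I \<subseteq> A" "lin_indep I" "card I = ldim A" using ldim_ex[OF assms(1)] by blast
  thus ?thesis using assms(2) unfolding ibound_def by metis
qed

lemma ibound_ldim: "A \<subseteq> vecs n \<Longrightarrow> ibound A (ldim A)"
  unfolding ibound_def using ldim_ge by blast

lemma ldim_mono: assumes "A \<subseteq> B" "B \<subseteq> vecs n" shows "ldim A \<le> ldim B"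
proof -
  obtain I where "finite I" "I \<subseteq> A" "lin_indep I" "card I = ldim A" using ldim_ex assms by (metis order_trans)
  thus ?thesis using ldim_ge[OF assms(2)] assms(1) by (metis order_trans)
qed

lemma ldim_le_n: "A \<subseteq> vecs n \<Longrightarrow> ldim A \<le> n"
  by (rule ldim_bound, assumption, rule ibound_mono[OF ibound_vecs])

lemma indep_insert:
  assumes A: "lsubspace n A" and IA: "I \<subseteq> A" and ind: "lin_indep I" and xA: "x \<notin> A"
  shows "lin_indep (insert x I)"
  unfolding lin_indep_def
proof (intro allI impI, elim conjE)
  fix F c assume finF: "finite F" and FI: "F \<subseteq> insert x I" and s: "(\<Sum>s\<in>F. smult (c s) s) = 0"
  show "\<forall>s\<in>F. c s = 0"
  proof (cases "x \<in> F")
    case False thus ?thesis using lin_indepD[OF ind finF _ s] FI by blast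
  next
    case True
    have split: "(\<Sum>s\<in>F. smult (c s) s) = smult (c x) x + (\<Sum>s\<in>F - {x}. smult (c s) s)"
      using True finF by (simp add: sum.remove)
    have restA: "(\<Sum>s\<in>F - {x}. smult (c s) s) \<in> A"
      using FI IA by (intro lsub_sum[OF A] lsubD(4)[OF A]) auto
    have cx: "c x = 0"
    proof (rule ccontr)
      assume cx: "c x \<noteq> 0"
      have "smult (c x) x = - (\<Sum>s\<in>F - {x}. smult (c s) s)" using s split
        by (simp add: eq_neg_iff_add_eq_0)
      hence "smult (inverse (c x)) (smult (c x) x) = smult (inverse (c x)) (- (\<Sum>s\<in>F - {x}. smult (c s) s))"
        by simp
      hence "x = smult (inverse (c x)) (- (\<Sum>s\<in>F - {x}. smult (c s) s))" using cx by simp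
      moreover have "smult (inverse (c x)) (- (\<Sum>s\<in>F - {x}. smult (c s) s)) \<in> A"
        using restA by (intro lsubD(4)[OF A] lsub_neg[OF A])
      ultimately show False using xA by simp
    qed
    hence z: "(\<Sum>s\<in>F - {x}. smult (c s) s) = 0" using s split by simp
    have "\<forall>s\<in>F - {x}. c s = 0" using lin_indepD[OF ind _ _ z] finF FI by blast
    thus ?thesis using cx by blast
  qed
qed

lemma ldim_strict:
  assumes A: "lsubspace n A" and B: "lsubspace n B" and AB: "A \<subseteq> B" "A \<noteq> B"
  shows "ldim A < ldim B"
proof -
  have Av: "A \<subseteq> vecs n" using lsubD(1)[OF A] .
  obtain I where I: "finite I" "I \<subseteq> A" "lin_indep I" "card I = ldim A" using ldim_ex[OF Av] by blast
  obtain x where x: "x \<in> B" "x \<notin> A" using AB by blast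
  have "lin_indep (insert x I)" by (rule indep_insert[OF A I(2,3) x(2)])
  moreover have "insert x I \<subseteq> B" using I(2) AB x by auto
  ultimately have "card (insert x I) \<le> ldim B" using ldim_ge[OF lsubD(1)[OF B]] I(1) by blast
  moreover have "x \<notin> I" using I(2) x(2) by blast
  hence "card (insert x I) = Suc (ldim A)" using I(1,4) by simp
  ultimately show ?thesis by simp
qed

lemma ldim_eq:
  assumes "lsubspace n A" "lsubspace n B" "A \<subseteq> B" "ldim B \<le> ldim A"
  shows "A = B"
  using ldim_strict[OF assms(1,2,3)] assms(4) by fastforce

lemma ldim_step:
  assumes A: "lsubspace n A" and x: "x \<in> vecs n"
  shows "ldim (ssum A (sp1 x)) \<le> Suc (ldim A)"
proof -
  have "ssum A (sp1 x) \<subseteq> vecs n" using lsub_ssum[OF A lsub_sp1[OF x]] lsubD(1) by blast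
  thus ?thesis using ldim_bound ibound_step[OF A ibound_ldim[OF lsubD(1)[OF A]]] by blast
qed

lemma vecs_lsub_le: "j \<le> n \<Longrightarrow> lsubspace n (vecs j)"
  unfolding lsubspace_def vecs_def by auto

lemma ldim_vecs_ge: "j \<le> n \<Longrightarrow> j \<le> ldim (vecs j :: (nat \<Rightarrow> 'a::division_ring) set)"
proof (induction j)
  case 0 thus ?case by simp
next
  case (Suc j)
  have "vecs j \<subseteq> (vecs (Suc j) :: (nat \<Rightarrow> 'a) set)" by (auto simp: vecs_def)
  moreover have "(evec j :: nat \<Rightarrow> 'a) \<in> vecs (Suc j) - vecs j" by (auto simp: vecs_def evec_def)
  ultimately have "ldim (vecs j :: (nat \<Rightarrow> 'a) set) < ldim (vecs (Suc j) :: (nat \<Rightarrow> 'a) set)"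
    using Suc.prems by (intro ldim_strict[of n] vecs_lsub_le) auto
  thus ?case using Suc by simp
qed

lemma ldim_vecs: "ldim (vecs n :: (nat \<Rightarrow> 'a::division_ring) set) = n"
proof -
  have "n \<le> ldim (vecs n :: (nat\<Rightarrow>'a) set)" by (rule ldim_vecs_ge[of n n]) simp
  moreover have "ldim (vecs n :: (nat\<Rightarrow>'a) set) \<le> n" by (rule ldim_le_n) simp
  ultimately show ?thesis by simp
qed



lemma ldim_strict': "lsubspace n A \<Longrightarrow> lsubspace n B \<Longrightarrow> A \<subseteq> B \<Longrightarrow> A \<noteq> B \<Longrightarrow> Suc (ldim A) \<le> ldim B"
  using ldim_strict by (simp add: Suc_le_eq)

lemma ldim_mono': "lsubspace n B \<Longrightarrow> A \<subseteq> B \<Longrightarrow> ldim A \<le> ldim B"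
  using ldim_mono lsubD(1) by blast

lemma sub_vec: "lsubspace n A \<Longrightarrow> x \<in> A \<Longrightarrow> x \<in> vecs n"
  using lsubD(1) by blast

lemma dim_adj:
  assumes a: "lsubspace n a" and b: "lsubspace n b" and da: "ldim a = d" and db: "ldim b = d"
    and dab: "Suc (ldim (a \<inter> b)) = d"
  shows "ldim (ssum a b) = Suc d"
proof -
  have "\<not> b \<subseteq> a"
  proof
    assume "b \<subseteq> a" hence "a \<inter> b = b" by blast
    thus False using dab db by simp
  qed
  then obtain y where yb: "y \<in> b" and ya: "y \<notin> a" by blast
  have yv: "y \<in> vecs n" using sub_vec[OF b yb] .
  have ab: "lsubspace n (a \<inter> b)" using lsub_Int[OF a b] .
  define T where "T = ssum (a \<inter> b) (sp1 y)"
  have T: "lsubspace n T" unfolding T_def by (rule lsub_ssum[OF ab lsub_sp1[OF yv]])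
  have Tb: "T \<subseteq> b" unfolding T_def by (rule ssum_sub[OF b]) (use sp1_sub[OF b yb] in auto)
  have abT: "a \<inter> b \<subseteq> T" unfolding T_def by (rule ssum_left[OF lsub_sp1[OF yv]])
  have yT: "y \<in> T" unfolding T_def using ssum_right[OF ab] sp1_self by blast
  have "a \<inter> b \<noteq> T" using yT ya by blast
  hence "Suc (ldim (a \<inter> b)) \<le> ldim T" using ldim_strict'[OF ab T abT] by simp
  hence "T = b" using ldim_eq[OF T b Tb] dab db by simp
  have S: "lsubspace n (ssum a (sp1 y))" by (rule lsub_ssum[OF a lsub_sp1[OF yv]])
  have "ssum a b \<subseteq> ssum a (sp1 y)"
  proof (rule ssum_sub[OF S])
    show "a \<subseteq> ssum a (sp1 y)" by (rule ssum_left[OF lsub_sp1[OF yv]])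
    show "b \<subseteq> ssum a (sp1 y)" using \<open>T = b\<close> unfolding T_def by (metis Int_lower1 order_refl ssum_mono)
  qed
  hence "ldim (ssum a b) \<le> Suc d" using ldim_mono'[OF S] ldim_step[OF a yv] da by (meson le_trans)
  moreover have "Suc d \<le> ldim (ssum a b)"
  proof -
    have "a \<subseteq> ssum a b" by (rule ssum_left[OF b])
    moreover have "y \<in> ssum a b" using ssum_right[OF a] yb by blast
    ultimately show ?thesis using ldim_strict'[OF a lsub_ssum[OF a b]] ya da by (metis)
  qed
  ultimately show ?thesis by simp
qed

lemma dim_hyp:
  assumes a: "lsubspace n a" and b: "lsubspace n b" and C: "lsubspace n C"
    and da: "ldim a = d" and db: "ldim b = d" and ne: "a \<noteq> b" and aC: "a \<subseteq> C" and bC: "b \<subseteq> C"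
    and dC: "ldim C = Suc d"
  shows "Suc (ldim (a \<inter> b)) = d"
proof -
  have "\<not> b \<subseteq> a" using ldim_eq[OF b a] da db ne by auto
  then obtain y where yb: "y \<in> b" and ya: "y \<notin> a" by blast
  have yv: "y \<in> vecs n" using sub_vec[OF b yb] .
  have ab: "lsubspace n (a \<inter> b)" using lsub_Int[OF a b] .
  have S: "lsubspace n (ssum a (sp1 y))" by (rule lsub_ssum[OF a lsub_sp1[OF yv]])
  have SC: "ssum a (sp1 y) \<subseteq> C" by (rule ssum_sub[OF C aC sp1_sub[OF C]]) (use yb bC in auto)
  have "Suc d \<le> ldim (ssum a (sp1 y))"
  proof -
    have "a \<subseteq> ssum a (sp1 y)" by (rule ssum_left[OF lsub_sp1[OF yv]])
    moreover have "y \<in> ssum a (sp1 y)" using ssum_right[OF a] sp1_self by blast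
    ultimately show ?thesis using ldim_strict'[OF a S] ya da by (metis)
  qed
  hence SeqC: "ssum a (sp1 y) = C" using ldim_eq[OF S C SC] dC by simp
  have "b \<subseteq> ssum (a \<inter> b) (sp1 y)"
  proof
    fix z assume zb: "z \<in> b"
    hence "z \<in> ssum a (sp1 y)" using SeqC bC by blast
    then obtain e f where zef: "z = e + f" and ea: "e \<in> a" and f: "f \<in> sp1 y" by (blast elim: ssumE)
    obtain t where ft: "f = smult t y" using f unfolding sp1_def by blast
    have "e = z - smult t y" using zef ft by simp
    hence "e \<in> b" using lsub_diff[OF b zb lsubD(4)[OF b yb]] by simp
    thus "z \<in> ssum (a \<inter> b) (sp1 y)" using zef ea f ssumI by blast
  qed
  hence "d \<le> Suc (ldim (a \<inter> b))" using ldim_mono'[OF lsub_ssum[OF ab lsub_sp1[OF yv]]] ldim_step[OF ab yv] db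
    by (meson le_trans)
  moreover have "a \<inter> b \<noteq> b" using yb ya by blast
  hence "Suc (ldim (a \<inter> b)) \<le> d" using ldim_strict'[OF ab b] db by simp
  ultimately show ?thesis by simp
qed

lemma inter_lt:
  assumes a: "lsubspace n a" and b: "lsubspace n b" and e: "ldim a = ldim b" and ne: "a \<noteq> b"
  shows "Suc (ldim (a \<inter> b)) \<le> ldim a"
proof -
  have "a \<inter> b \<noteq> a"
  proof
    assume "a \<inter> b = a" hence "a \<subseteq> b" by blast
    thus False using ldim_eq[OF a b] e ne by simp
  qed
  thus ?thesis using ldim_strict'[OF lsub_Int[OF a b] a] by simp
qed

lemma sum_gt:
  assumes a: "lsubspace n a" and b: "lsubspace n b" and e: "ldim a = ldim b" and ne: "a \<noteq> b"
  shows "Suc (ldim a) \<le> ldim (ssum a b)"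
proof -
  have "\<not> b \<subseteq> a" using ldim_eq[OF b a] e ne by auto
  hence "a \<noteq> ssum a b" using ssum_right[OF a, of b] by blast
  thus ?thesis using ldim_strict'[OF a lsub_ssum[OF a b] ssum_left[OF b]] by simp
qed

lemma meet_eq:
  assumes c: "lsubspace n c" and d: "lsubspace n d" and H: "lsubspace n H"
    and dc: "ldim c = Suc h" and dd: "ldim d = Suc h" and ne: "c \<noteq> d"
    and Hc: "H \<subseteq> c" and Hd: "H \<subseteq> d" and dH: "ldim H = h"
  shows "c \<inter> d = H"
proof -
  have "Suc (ldim (c \<inter> d)) \<le> Suc h" using inter_lt[OF c d] dc dd ne by simp
  moreover have cd: "lsubspace n (c \<inter> d)" using lsub_Int[OF c d] .
  ultimately show ?thesis using ldim_eq[OF H cd] Hc Hd dH by simp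
qed

lemma join_eq:
  assumes c: "lsubspace n c" and d: "lsubspace n d" and B: "lsubspace n B"
    and dc: "ldim c = h" and dd: "ldim d = h" and ne: "c \<noteq> d"
    and cB: "c \<subseteq> B" and dB: "d \<subseteq> B" and dimB: "ldim B = Suc h"
  shows "ssum c d = B"
proof -
  have "Suc h \<le> ldim (ssum c d)" using sum_gt[OF c d] dc dd ne by simp
  thus ?thesis using ldim_eq[OF lsub_ssum[OF c d] B ssum_sub[OF B cB dB]] dimB by simp
qed



lemma Sub_iff: "U \<in> Sub n j \<longleftrightarrow> lsubspace n U \<and> ldim U = j" by (simp add: Sub_def)

lemma pencil_iff: "U \<in> pencil n k H B \<longleftrightarrow> U \<in> Sub n k \<and> H \<subseteq> U \<and> U \<subseteq> B"
  by (simp add: pencil_def)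

lemma two_ptsE: "two_pts A \<Longrightarrow> (\<And>x y. x \<in> A \<Longrightarrow> y \<in> A \<Longrightarrow> x \<noteq> y \<Longrightarrow> P) \<Longrightarrow> P"
  unfolding two_pts_def by blast

lemma two_ptsI: "x \<in> A \<Longrightarrow> y \<in> A \<Longrightarrow> x \<noteq> y \<Longrightarrow> two_pts A"
  unfolding two_pts_def by blast

context
  fixes n k :: nat and W :: "(nat \<Rightarrow> 'a::division_ring) set" and m :: nat
  assumes k1: "1 < k"
begin

abbreviation "Pt \<equiv> spoints n k W m"

lemma Pt_iff: "U \<in> Pt \<longleftrightarrow> U \<in> Sub n k \<and> ldim (U \<inter> W) = m"
  by (simp add: spoints_def)

lemma pencil_two:
  assumes H: "H \<in> Sub n (k - 1)" and B: "B \<in> Sub n (k + 1)"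
    and U: "U \<in> pencil n k H B" and U': "U' \<in> pencil n k H B" and ne: "U \<noteq> U'"
  shows "H = U \<inter> U'" "B = ssum U U'"
proof -
  have u: "lsubspace n U" "ldim U = k" "H \<subseteq> U" "U \<subseteq> B" using U by (auto simp: pencil_iff Sub_iff)
  have u': "lsubspace n U'" "ldim U' = k" "H \<subseteq> U'" "U' \<subseteq> B" using U' by (auto simp: pencil_iff Sub_iff)
  have h: "lsubspace n H" "ldim H = k - 1" using H by (auto simp: Sub_iff)
  have b: "lsubspace n B" "ldim B = Suc k" using B by (auto simp: Sub_iff)
  have "U \<inter> U' = H"
    by (rule meet_eq[OF u(1) u'(1) h(1), of "k - 1"]) (use u u' h ne k1 in auto)
  thus "H = U \<inter> U'" by simp
  have "ssum U U' = B"
    by (rule join_eq[OF u(1) u'(1) b(1), of k]) (use u u' b ne in auto)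
  thus "B = ssum U U'" by simp
qed

definition rep :: "(nat \<Rightarrow> 'a) set set \<Rightarrow> (nat \<Rightarrow> 'a) set \<Rightarrow> (nat \<Rightarrow> 'a) set \<Rightarrow> bool" where
  "rep L H B \<longleftrightarrow> H \<in> Sub n (k - 1) \<and> B \<in> Sub n (k + 1) \<and> H \<subseteq> B \<and>
     L = pencil n k H B \<inter> Pt \<and> two_pts L"

lemma slines_rep: "L \<in> slines n k W m \<longleftrightarrow> (\<exists>H B. rep L H B)"
  unfolding slines_def rep_def is_pencil_def by blast

lemma rep_unique: assumes "rep L H B" "rep L H' B'" shows "H = H'" "B = B'"
proof -
  obtain x y where xy: "x \<in> L" "y \<in> L" "x \<noteq> y" using assms(1) unfolding rep_def by (blast elim: two_ptsE)
  have "x \<in> pencil n k H B" "y \<in> pencil n k H B" "x \<in> pencil n k H' B'" "y \<in> pencil n k H' B'"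
    using xy assms unfolding rep_def by auto
  moreover have "H \<in> Sub n (k - 1)" "B \<in> Sub n (k + 1)" "H' \<in> Sub n (k - 1)" "B' \<in> Sub n (k + 1)"
    using assms unfolding rep_def by auto
  ultimately have "H = x \<inter> y" "B = ssum x y" "H' = x \<inter> y" "B' = ssum x y"
    using pencil_two[of H B x y] pencil_two[of H' B' x y] xy(3) by auto
  thus "H = H'" "B = B'" by simp_all
qed

lemma rep_eq: "rep L H B \<Longrightarrow> rep L' H B \<Longrightarrow> L = L'"
  unfolding rep_def by simp

lemma rep_pts: assumes "rep L H B" "U \<in> L"
  shows "U \<in> Pt" "lsubspace n U" "ldim U = k" "H \<subseteq> U" "U \<subseteq> B"
  using assms unfolding rep_def by (auto simp: pencil_iff Sub_iff)

lemma rep_HB: assumes "rep L H B"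
  shows "lsubspace n H" "ldim H = k - 1" "lsubspace n B" "ldim B = Suc k" "H \<subseteq> B"
  using assms unfolding rep_def by (auto simp: Sub_iff)

lemma rep_HB_pts: assumes "rep L H B" "x \<in> L" "y \<in> L" "x \<noteq> y"
  shows "H = x \<inter> y" "B = ssum x y"
proof -
  have "H \<in> Sub n (k - 1)" "B \<in> Sub n (k + 1)" "x \<in> pencil n k H B" "y \<in> pencil n k H B"
    using assms unfolding rep_def by auto
  thus "H = x \<inter> y" "B = ssum x y" using pencil_two[of H B x y] assms(4) by auto
qed

lemma pencil_of_rep: assumes r: "rep L H B" shows "pencil_of n k L = pencil n k H B"
  unfolding pencil_of_def
proof (rule the_equality)
  show "is_pencil n k (pencil n k H B) \<and> L \<subseteq> pencil n k H B"
    using r unfolding rep_def is_pencil_def by blast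
  fix l assume l: "is_pencil n k l \<and> L \<subseteq> l"
  then obtain H' B' where hb: "H' \<in> Sub n (k - 1)" "B' \<in> Sub n (k + 1)" "l = pencil n k H' B'"
    unfolding is_pencil_def by blast
  obtain x y where xy: "x \<in> L" "y \<in> L" "x \<noteq> y" using r unfolding rep_def by (blast elim: two_ptsE)
  have "H' = x \<inter> y" "B' = ssum x y" using pencil_two[OF hb(1,2), of x y] xy l hb(3) by auto
  moreover have "H = x \<inter> y" "B = ssum x y" using rep_HB_pts[OF r xy] by auto
  ultimately show "l = pencil n k H B" using hb(3) by simp
qed

lemma adj_line:
  assumes a: "a \<in> Pt" and b: "b \<in> Pt" and ne: "a \<noteq> b" and adj: "Suc (ldim (a \<inter> b)) = k"
  shows "rep (pencil n k (a \<inter> b) (ssum a b) \<inter> Pt) (a \<inter> b) (ssum a b)"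
    "a \<in> pencil n k (a \<inter> b) (ssum a b) \<inter> Pt" "b \<in> pencil n k (a \<inter> b) (ssum a b) \<inter> Pt"
proof -
  have la: "lsubspace n a" "ldim a = k" using a by (auto simp: Pt_iff Sub_iff)
  have lb: "lsubspace n b" "ldim b = k" using b by (auto simp: Pt_iff Sub_iff)
  have d: "ldim (ssum a b) = Suc k" by (rule dim_adj[OF la(1) lb(1) la(2) lb(2) adj])
  have sa: "a \<subseteq> ssum a b" "b \<subseteq> ssum a b" using ssum_left[OF lb(1)] ssum_right[OF la(1)] by auto
  show A: "a \<in> pencil n k (a \<inter> b) (ssum a b) \<inter> Pt" using a sa by (auto simp: pencil_iff Pt_iff)
  show B: "b \<in> pencil n k (a \<inter> b) (ssum a b) \<inter> Pt" using b sa by (auto simp: pencil_iff Pt_iff)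
  show "rep (pencil n k (a \<inter> b) (ssum a b) \<inter> Pt) (a \<inter> b) (ssum a b)"
    unfolding rep_def
  proof (intro conjI)
    show "a \<inter> b \<in> Sub n (k - 1)" using lsub_Int[OF la(1) lb(1)] adj by (auto simp: Sub_iff)
    show "ssum a b \<in> Sub n (k + 1)" using lsub_ssum[OF la(1) lb(1)] d by (auto simp: Sub_iff)
    show "a \<inter> b \<subseteq> ssum a b" using sa by blast
    show "two_pts (pencil n k (a \<inter> b) (ssum a b) \<inter> Pt)" by (rule two_ptsI[OF A B ne])
  qed simp
qed

definition coll :: "(nat \<Rightarrow> 'a) set \<Rightarrow> (nat \<Rightarrow> 'a) set \<Rightarrow> bool" where
  "coll a b \<longleftrightarrow> (\<exists>L \<in> slines n k W m. a \<in> L \<and> b \<in> L)"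

lemma coll_adj: assumes "a \<in> Pt" "b \<in> Pt" "a \<noteq> b" "coll a b"
  shows "Suc (ldim (a \<inter> b)) = k"
proof -
  obtain L where L: "L \<in> slines n k W m" and ab: "a \<in> L" "b \<in> L" using assms(4) unfolding coll_def by blast
  then obtain H B where r: "rep L H B" using slines_rep by blast
  have "H = a \<inter> b" using rep_HB_pts[OF r ab assms(3)] by simp
  thus ?thesis using rep_HB(2)[OF r] k1 by simp
qed

lemma adj_coll: assumes "a \<in> Pt" "b \<in> Pt" "a \<noteq> b" "Suc (ldim (a \<inter> b)) = k"
  shows "coll a b"
proof -
  note al = adj_line[OF assms]
  have "\<exists>H B. rep (pencil n k (a \<inter> b) (ssum a b) \<inter> Pt) H B"
    by (rule exI[of _ "a \<inter> b"], rule exI[of _ "ssum a b"], rule al(1))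
  hence L: "pencil n k (a \<inter> b) (ssum a b) \<inter> Pt \<in> slines n k W m"
    by (simp only: slines_rep)
  show "coll a b" unfolding coll_def
    by (rule bexI[OF _ L]) (use al(2,3) in blast)
qed

definition pcoll :: "(nat \<Rightarrow> 'a) set set \<Rightarrow> bool" where
  "pcoll X \<longleftrightarrow> X \<subseteq> Pt \<and> (\<forall>a\<in>X. \<forall>b\<in>X. a \<noteq> b \<longrightarrow> Suc (ldim (a \<inter> b)) = k)"

lemma Pt_D: "U \<in> Pt \<Longrightarrow> lsubspace n U" "U \<in> Pt \<Longrightarrow> ldim U = k"
  by (auto simp: Pt_iff Sub_iff)

lemma adj3:
  assumes a: "lsubspace n a" "ldim a = k" and b: "lsubspace n b" "ldim b = k"
    and c: "lsubspace n c" "ldim c = k" and d: "lsubspace n d" "ldim d = k"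
    and ab: "a \<noteq> b" "Suc (ldim (a \<inter> b)) = k"
    and da: "d = a \<or> Suc (ldim (d \<inter> a)) = k" and db: "d = b \<or> Suc (ldim (d \<inter> b)) = k"
    and c1: "a \<inter> b \<subseteq> c" and c2: "c \<subseteq> ssum a b" and cd: "c \<noteq> d"
  shows "Suc (ldim (c \<inter> d)) = k"
proof -
  have iab: "lsubspace n (a \<inter> b)" "ldim (a \<inter> b) = k - 1" using lsub_Int[OF a(1) b(1)] ab k1 by auto
  have sab: "lsubspace n (ssum a b)" "ldim (ssum a b) = Suc k"
    using lsub_ssum[OF a(1) b(1)] dim_adj[OF a(1) b(1) a(2) b(2) ab(2)] by auto
  have key: "a \<inter> b \<subseteq> d \<or> d \<subseteq> ssum a b"
  proof (cases "d = a \<or> d = b")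
    case True thus ?thesis by blast
  next
    case False
    hence da': "Suc (ldim (d \<inter> a)) = k" and db': "Suc (ldim (d \<inter> b)) = k" using da db by auto
    have i1: "lsubspace n (d \<inter> a)" "lsubspace n (d \<inter> b)" using lsub_Int d(1) a(1) b(1) by auto
    show ?thesis
    proof (cases "d \<inter> a = d \<inter> b")
      case True
      hence "d \<inter> a \<subseteq> a \<inter> b" by blast
      hence "d \<inter> a = a \<inter> b" using ldim_eq[OF i1(1) iab(1)] da' iab(2) by simp
      thus ?thesis by blast
    next
      case False
      have "ssum (d \<inter> a) (d \<inter> b) = d"
        by (rule join_eq[OF i1(1) i1(2) d(1), of "k - 1"]) (use da' db' False d(2) k1 in auto)
      moreover have "ssum (d \<inter> a) (d \<inter> b) \<subseteq> ssum a b" by (rule ssum_mono) auto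
      ultimately show ?thesis by simp
    qed
  qed
  show ?thesis
  proof (cases "a \<inter> b \<subseteq> d")
    case True
    have "c \<inter> d = a \<inter> b"
      by (rule meet_eq[OF c(1) d(1) iab(1), of "k - 1"]) (use c d cd c1 True iab k1 in auto)
    thus ?thesis using iab k1 by simp
  next
    case False
    hence "d \<subseteq> ssum a b" using key by blast
    thus ?thesis using dim_hyp[OF c(1) d(1) sab(1) c(2) d(2) cd c2 _ sab(2)] by simp
  qed
qed

lemma pcollD: "pcoll X \<Longrightarrow> X \<subseteq> Pt" "pcoll X \<Longrightarrow> a \<in> X \<Longrightarrow> b \<in> X \<Longrightarrow> a \<noteq> b \<Longrightarrow> Suc (ldim (a \<inter> b)) = k"
  unfolding pcoll_def by blast+

lemma zorn_pcoll: assumes "pcoll C0"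
  shows "\<exists>X. C0 \<subseteq> X \<and> pcoll X \<and> (\<forall>Y. pcoll Y \<and> X \<subseteq> Y \<longrightarrow> Y = X)"
proof -
  define A where "A = {X. C0 \<subseteq> X \<and> pcoll X}"
  have "\<exists>M\<in>A. \<forall>X\<in>A. M \<subseteq> X \<longrightarrow> X = M"
  proof (rule subset_Zorn)
    fix C assume ch: "subset.chain A C"
    have CA: "C \<subseteq> A" and cmp: "\<And>X Y. X \<in> C \<Longrightarrow> Y \<in> C \<Longrightarrow> X \<subseteq> Y \<or> Y \<subseteq> X"
      using ch unfolding subset.chain_def by auto
    have CA': "C0 \<subseteq> X" "pcoll X" if "X \<in> C" for X using CA that unfolding A_def by auto
    show "\<exists>U\<in>A. \<forall>X\<in>C. X \<subseteq> U"
    proof (cases "C = {}")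
      case True
      have "C0 \<in> A" using assms unfolding A_def by simp
      thus ?thesis using True by (intro bexI[of _ C0]) auto
    next
      case False
      then obtain X0 where X0: "X0 \<in> C" by blast
      have p: "pcoll (\<Union>C)"
        unfolding pcoll_def
      proof (intro conjI ballI impI)
        show "\<Union>C \<subseteq> Pt"
        proof
          fix x assume "x \<in> \<Union>C"
          then obtain X where "X \<in> C" "x \<in> X" by (rule UnionE)
          thus "x \<in> Pt" using pcollD(1)[OF CA'(2)] by (meson subsetD)
        qed
        fix a b assume a: "a \<in> \<Union>C" and b: "b \<in> \<Union>C" and ne: "a \<noteq> b"
        obtain X where X: "X \<in> C" "a \<in> X" using a by (rule UnionE)
        obtain Y where Y: "Y \<in> C" "b \<in> Y" using b by (rule UnionE)
        show "Suc (ldim (a \<inter> b)) = k"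
        proof (cases "X \<subseteq> Y")
          case True thus ?thesis using pcollD(2)[OF CA'(2)[OF Y(1)] _ Y(2) ne] X(2) by (meson subsetD)
        next
          case False
          hence "Y \<subseteq> X" using cmp[OF X(1) Y(1)] by simp
          thus ?thesis using pcollD(2)[OF CA'(2)[OF X(1)] X(2) _ ne] Y(2) by (meson subsetD)
        qed
      qed
      have "C0 \<subseteq> \<Union>C" using CA'(1)[OF X0] X0 by (meson Union_upper order_trans)
      hence "\<Union>C \<in> A" using p unfolding A_def by simp
      thus ?thesis by (intro bexI[of _ "\<Union>C"]) auto
    qed
  qed
  then obtain M where "M \<in> A" "\<forall>X\<in>A. M \<subseteq> X \<longrightarrow> X = M" by blast
  hence "C0 \<subseteq> M" "pcoll M" "\<forall>Y. pcoll Y \<and> M \<subseteq> Y \<longrightarrow> Y = M" unfolding A_def by auto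
  thus ?thesis by blast
qed

lemma pcoll_of_strong: assumes "strong_subspace n k W m X" shows "pcoll X"
  unfolding pcoll_def
proof (intro conjI ballI impI)
  show XP: "X \<subseteq> Pt" using assms unfolding strong_subspace_def spine_subspace_def by blast
  fix a b assume "a \<in> X" "b \<in> X" "a \<noteq> b"
  moreover have "coll a b" using assms \<open>a \<in> X\<close> \<open>b \<in> X\<close> \<open>a \<noteq> b\<close>
    unfolding strong_subspace_def coll_def by blast
  ultimately show "Suc (ldim (a \<inter> b)) = k" using coll_adj XP by blast
qed

lemma line_coll: assumes "rep L H B" "u \<in> L" "v \<in> L" "u \<noteq> v" shows "Suc (ldim (u \<inter> v)) = k"
proof -
  have "L \<in> slines n k W m" using assms(1) slines_rep by blast
  hence "coll u v" unfolding coll_def using assms(2,3) by blast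
  thus ?thesis using coll_adj rep_pts(1)[OF assms(1)] assms(2,3,4) by blast
qed

lemma max_pcoll_strong:
  assumes pc: "pcoll X" and mx: "\<forall>Y. pcoll Y \<and> X \<subseteq> Y \<longrightarrow> Y = X"
  shows "max_strong_subspace n k W m X"
proof -
  have XP: "X \<subseteq> Pt" and adjX: "\<And>a b. a \<in> X \<Longrightarrow> b \<in> X \<Longrightarrow> a \<noteq> b \<Longrightarrow> Suc (ldim (a \<inter> b)) = k"
    using pc unfolding pcoll_def by auto
  have sub: "spine_subspace n k W m X"
    unfolding spine_subspace_def
  proof (intro conjI ballI impI)
    show "X \<subseteq> Pt" by (rule XP)
    fix L assume L: "L \<in> slines n k W m" and tp: "two_pts (L \<inter> X)"
    obtain H B where r: "rep L H B" using L slines_rep by blast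
    obtain a b where ab: "a \<in> L" "a \<in> X" "b \<in> L" "b \<in> X" "a \<noteq> b" using tp by (blast elim: two_ptsE)
    have HB: "H = a \<inter> b" "B = ssum a b" using rep_HB_pts[OF r ab(1) ab(3) ab(5)] by auto
    have cross: "Suc (ldim (u \<inter> v)) = k" if u: "u \<in> L" and v: "v \<in> X" and vL: "v \<notin> L" for u v
    proof -
      have vP: "v \<in> Pt" using v XP by blast
      show ?thesis
      proof (rule adj3)
        show "lsubspace n a" "ldim a = k" "lsubspace n b" "ldim b = k" using rep_pts[OF r ab(1)] rep_pts[OF r ab(3)] by auto
        show "lsubspace n u" "ldim u = k" using rep_pts[OF r u] by auto
        show "lsubspace n v" "ldim v = k" using Pt_D[OF vP] by auto
        show "a \<noteq> b" by (rule ab(5))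
        show "Suc (ldim (a \<inter> b)) = k" by (rule line_coll[OF r ab(1) ab(3) ab(5)])
        have "v \<noteq> a" "v \<noteq> b" using vL ab by auto
        thus "v = a \<or> Suc (ldim (v \<inter> a)) = k" "v = b \<or> Suc (ldim (v \<inter> b)) = k"
          using adjX[OF v ab(2)] adjX[OF v ab(4)] by auto
        show "a \<inter> b \<subseteq> u" "u \<subseteq> ssum a b" using rep_pts[OF r u] HB by auto
        show "u \<noteq> v" using u vL by blast
      qed
    qed
    have "pcoll (X \<union> L)"
      unfolding pcoll_def
    proof (intro conjI ballI impI)
      show "X \<union> L \<subseteq> Pt" using XP rep_pts(1)[OF r] by blast
      fix u v assume u: "u \<in> X \<union> L" and v: "v \<in> X \<union> L" and ne: "u \<noteq> v"
      show "Suc (ldim (u \<inter> v)) = k"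
      proof (cases "u \<in> L \<and> v \<in> L")
        case True thus ?thesis using line_coll[OF r _ _ ne] by blast
      next
        case False
        show ?thesis
        proof (cases "u \<in> X \<and> v \<in> X")
          case True thus ?thesis using adjX ne by blast
        next
          case False2: False
          show ?thesis
          proof (cases "u \<in> L")
            case True
            hence "v \<in> X" "v \<notin> L" using False False2 u v by auto
            thus ?thesis using cross[OF True] by blast
          next
            case uL: False
            hence "u \<in> X" "v \<in> L" using False False2 u v by auto
            thus ?thesis using cross[of v u] uL by (simp add: Int_commute)
          qed
        qed
      qed
    qed
    hence "X \<union> L = X" using mx by blast
    thus "L \<subseteq> X" by blast
  qed
  have str: "strong_subspace n k W m X"
    unfolding strong_subspace_def
  proof (intro conjI ballI impI)
    show "spine_subspace n k W m X" by (rule sub)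
    fix U U' assume "U \<in> X" "U' \<in> X" "U \<noteq> U'"
    hence "coll U U'" using adj_coll adjX XP by blast
    thus "\<exists>L\<in>slines n k W m. U \<in> L \<and> U' \<in> L" unfolding coll_def .
  qed
  show ?thesis unfolding max_strong_subspace_def
    using str mx pcoll_of_strong by blast
qed

lemma pencil_in_closure: assumes r: "rep L H B" and LX: "L \<subseteq> X"
  shows "pencil n k H B \<subseteq> grass_closure n k X"
  unfolding grass_closure_def
proof (rule Inter_greatest)
  fix Y assume "Y \<in> {Y. grass_subspace n k Y \<and> X \<subseteq> Y}"
  hence gY: "grass_subspace n k Y" and XY: "X \<subseteq> Y" by auto
  have ip: "is_pencil n k (pencil n k H B)" using r unfolding rep_def is_pencil_def by blast
  obtain x y where xy: "x \<in> L" "y \<in> L" "x \<noteq> y" using r unfolding rep_def by (blast elim: two_ptsE)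
  have "x \<in> pencil n k H B \<inter> Y" "y \<in> pencil n k H B \<inter> Y" using xy r LX XY unfolding rep_def by auto
  hence "two_pts (pencil n k H B \<inter> Y)" using xy(3) by (blast intro: two_ptsI)
  thus "pencil n k H B \<subseteq> Y" using gY ip unfolding grass_subspace_def by blast
qed

lemma in_plane: assumes r: "rep L H B" and Z: "lsubspace n Z"
    and LP: "L \<subseteq> {U \<in> Sub n k. Y \<subseteq> U \<and> U \<subseteq> Z}"
  shows "Y \<subseteq> H" "B \<subseteq> Z"
proof -
  obtain x y where xy: "x \<in> L" "y \<in> L" "x \<noteq> y" using r unfolding rep_def by (blast elim: two_ptsE)
  have HB: "H = x \<inter> y" "B = ssum x y" using rep_HB_pts[OF r xy] by auto
  have "Y \<subseteq> x" "Y \<subseteq> y" "x \<subseteq> Z" "y \<subseteq> Z" using xy LP by auto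
  thus "Y \<subseteq> H" "B \<subseteq> Z" using HB ssum_sub[OF Z] by auto
qed

lemma mk_plane:
  assumes Y: "lsubspace n Y" and Z: "lsubspace n Z" and YZ: "Y \<subseteq> Z"
    and dims: "(ldim Y = k - 2 \<and> ldim Z = k + 1) \<or> (ldim Y = k - 1 \<and> ldim Z = k + 2)"
    and r1: "rep L1 H1 B1" and r2: "rep L2 H2 B2" and ne: "L1 \<noteq> L2"
    and h: "Y \<subseteq> H1" "Y \<subseteq> H2" "B1 \<subseteq> Z" "B2 \<subseteq> Z"
  shows "spine_plane n k W m ({U \<in> Sub n k. Y \<subseteq> U \<and> U \<subseteq> Z} \<inter> Pt)"
    "\<And>L H B. rep L H B \<Longrightarrow> Y \<subseteq> H \<Longrightarrow> B \<subseteq> Z \<Longrightarrow> L \<subseteq> {U \<in> Sub n k. Y \<subseteq> U \<and> U \<subseteq> Z} \<inter> Pt"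
proof -
  show inE: "L \<subseteq> {U \<in> Sub n k. Y \<subseteq> U \<and> U \<subseteq> Z} \<inter> Pt" if "rep L H B" "Y \<subseteq> H" "B \<subseteq> Z" for L H B
  proof
    fix U assume "U \<in> L"
    note rp = rep_pts[OF that(1) this]
    have "U \<in> Sub n k" using rp by (simp add: Sub_iff)
    moreover have "Y \<subseteq> U" "U \<subseteq> Z" using rp that by auto
    ultimately show "U \<in> {U \<in> Sub n k. Y \<subseteq> U \<and> U \<subseteq> Z} \<inter> Pt" using rp(1) by blast
  qed
  have gp: "grass_plane n k {U \<in> Sub n k. Y \<subseteq> U \<and> U \<subseteq> Z}"
    unfolding grass_plane_def using Y Z YZ dims by blast
  have L12: "L1 \<in> slines n k W m" "L2 \<in> slines n k W m" using r1 r2 slines_rep by blast+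
  show "spine_plane n k W m ({U \<in> Sub n k. Y \<subseteq> U \<and> U \<subseteq> Z} \<inter> Pt)"
    unfolding spine_plane_def
  proof (intro conjI)
    show "\<exists>P. grass_plane n k P \<and> {U \<in> Sub n k. Y \<subseteq> U \<and> U \<subseteq> Z} \<inter> Pt = P \<inter> Pt"
      using gp by blast
    show "\<exists>L1 L2. L1 \<in> slines n k W m \<and> L2 \<in> slines n k W m \<and> L1 \<noteq> L2 \<and>
        L1 \<subseteq> {U \<in> Sub n k. Y \<subseteq> U \<and> U \<subseteq> Z} \<inter> Pt \<and> L2 \<subseteq> {U \<in> Sub n k. Y \<subseteq> U \<and> U \<subseteq> Z} \<inter> Pt"
      using L12 ne inE[OF r1 h(1) h(3)] inE[OF r2 h(2) h(4)] by blast
  qed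
qed

lemma mk_pi_rel:
  assumes Y: "lsubspace n Y" and Z: "lsubspace n Z" and YZ: "Y \<subseteq> Z"
    and dims: "(ldim Y = k - 2 \<and> ldim Z = k + 1) \<or> (ldim Y = k - 1 \<and> ldim Z = k + 2)"
    and r1: "rep L1 H1 B1" and r2: "rep L2 H2 B2" and ne: "L1 \<noteq> L2"
    and h: "Y \<subseteq> H1" "Y \<subseteq> H2" "B1 \<subseteq> Z" "B2 \<subseteq> Z"
  shows "pi_rel n k W m L1 L2"
  unfolding pi_rel_def
  using mk_plane[OF assms] mk_plane(2)[OF assms r1 h(1) h(3)] mk_plane(2)[OF assms r2 h(2) h(4)] by blast

lemma pi_share:
  assumes r1: "rep L1 H1 B1" and r2: "rep L2 H2 B2" and ne: "L1 \<noteq> L2" and pr: "pi_rel n k W m L1 L2"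
  shows "(H1 = H2 \<and> (\<exists>Z. lsubspace n Z \<and> ldim Z = k + 2 \<and> B1 \<subseteq> Z \<and> B2 \<subseteq> Z)) \<or>
         (B1 = B2 \<and> (\<exists>Y. lsubspace n Y \<and> ldim Y = k - 2 \<and> Y \<subseteq> H1 \<and> Y \<subseteq> H2))"
proof -
  obtain E where E: "spine_plane n k W m E" "L1 \<subseteq> E" "L2 \<subseteq> E" using pr unfolding pi_rel_def by blast
  then obtain P where P: "grass_plane n k P" "E = P \<inter> Pt" unfolding spine_plane_def by blast
  then obtain Y Z where YZ: "lsubspace n Y" "lsubspace n Z" "Y \<subseteq> Z"
     "(ldim Y = k - 2 \<and> ldim Z = k + 1) \<or> (ldim Y = k - 1 \<and> ldim Z = k + 2)"
     "P = {U \<in> Sub n k. Y \<subseteq> U \<and> U \<subseteq> Z}" unfolding grass_plane_def by blast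
  have "L1 \<subseteq> {U \<in> Sub n k. Y \<subseteq> U \<and> U \<subseteq> Z}" "L2 \<subseteq> {U \<in> Sub n k. Y \<subseteq> U \<and> U \<subseteq> Z}"
    using E(2,3) P(2) YZ(5) by auto
  note i1 = in_plane[OF r1 YZ(2) this(1)] and i2 = in_plane[OF r2 YZ(2) this(2)]
  show ?thesis
  proof (cases "ldim Y = k - 2 \<and> ldim Z = k + 1")
    case True
    have "B1 = Z" using ldim_eq[OF rep_HB(3)[OF r1] YZ(2) i1(2)] rep_HB(4)[OF r1] True by simp
    moreover have "B2 = Z" using ldim_eq[OF rep_HB(3)[OF r2] YZ(2) i2(2)] rep_HB(4)[OF r2] True by simp
    ultimately show ?thesis using YZ(1) True i1(1) i2(1) by blast
  next
    case False
    hence d: "ldim Y = k - 1" "ldim Z = k + 2" using YZ(4) by auto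
    have "Y = H1" using ldim_eq[OF YZ(1) rep_HB(1)[OF r1] i1(1)] rep_HB(2)[OF r1] d by simp
    moreover have "Y = H2" using ldim_eq[OF YZ(1) rep_HB(1)[OF r2] i2(1)] rep_HB(2)[OF r2] d by simp
    ultimately show ?thesis using YZ(2) d i1(2) i2(2) by blast
  qed
qed

lemma flat_clique: "spine_plane n k W m E \<Longrightarrow> pi_clique n k W m (flat n k W m E)"
  unfolding pi_clique_def flat_def pi_rel_def by blast

lemma rep_pencil_of: assumes "rep L H B" "U \<in> pencil_of n k L"
  shows "lsubspace n U" "ldim U = k" "H \<subseteq> U" "U \<subseteq> B"
  using assms pencil_of_rep[OF assms(1)] by (auto simp: pencil_iff Sub_iff)

lemma sb_clique: assumes pc: "pcoll X" shows "pi_clique n k W m (semibundle n k W m U X)"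
  unfolding pi_clique_def
proof (intro conjI ballI impI)
  show "semibundle n k W m U X \<subseteq> slines n k W m" unfolding semibundle_def by blast
  fix L1 L2 assume L1: "L1 \<in> semibundle n k W m U X" and L2: "L2 \<in> semibundle n k W m U X" and ne: "L1 \<noteq> L2"
  have L1': "L1 \<in> slines n k W m" "U \<in> pencil_of n k L1" "L1 \<subseteq> X" using L1 unfolding semibundle_def by auto
  have L2': "L2 \<in> slines n k W m" "U \<in> pencil_of n k L2" "L2 \<subseteq> X" using L2 unfolding semibundle_def by auto
  obtain H1 B1 where r1: "rep L1 H1 B1" using L1'(1) slines_rep by blast
  obtain H2 B2 where r2: "rep L2 H2 B2" using L2'(1) slines_rep by blast
  note u1 = rep_pencil_of[OF r1 L1'(2)] and u2 = rep_pencil_of[OF r2 L2'(2)]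
  note h1 = rep_HB[OF r1] and h2 = rep_HB[OF r2]
  show "pi_rel n k W m L1 L2"
  proof (cases "H1 = H2")
    case True
    have Bne: "B1 \<noteq> B2" using True ne rep_eq[OF r1] r2 by blast
    have I: "lsubspace n (B1 \<inter> B2)" using lsub_Int[OF h1(3) h2(3)] .
    have "k \<le> ldim (B1 \<inter> B2)" using ldim_mono'[OF I, of U] u1 u2 by auto
    moreover have "Suc (ldim (B1 \<inter> B2)) \<le> Suc k" using inter_lt[OF h1(3) h2(3)] h1(4) h2(4) Bne by simp
    ultimately have "Suc (ldim (B1 \<inter> B2)) = Suc k" by simp
    hence dZ: "ldim (ssum B1 B2) = Suc (Suc k)" using dim_adj[OF h1(3) h2(3) h1(4) h2(4)] by simp
    have Z: "lsubspace n (ssum B1 B2)" using lsub_ssum[OF h1(3) h2(3)] .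
    have "B1 \<subseteq> ssum B1 B2" "B2 \<subseteq> ssum B1 B2" using ssum_left[OF h2(3)] ssum_right[OF h1(3)] by auto
    thus ?thesis using mk_pi_rel[OF h1(1) Z _ _ r1 r2 ne] True h1(2,5) dZ by auto
  next
    case Hne: False
    show ?thesis
    proof (cases "B1 = B2")
      case True
      have I: "lsubspace n (H1 \<inter> H2)" using lsub_Int[OF h1(1) h2(1)] .
      have "Suc (ldim (H1 \<inter> H2)) = k - 1"
        by (rule dim_hyp[OF h1(1) h2(1) u1(1)]) (use h1 h2 Hne u1 u2 k1 in auto)
      hence dY: "ldim (H1 \<inter> H2) = k - 2" by simp
      have "H1 \<inter> H2 \<subseteq> B1" using h1(5) by blast
      thus ?thesis using mk_pi_rel[OF I h1(3) _ _ r1 r2 ne] True dY h1(4) h2(5) by auto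
    next
      case Bne: False
      obtain x y where xy: "x \<in> L1" "y \<in> L1" "x \<noteq> y" using r1 unfolding rep_def by (blast elim: two_ptsE)
      obtain a where a: "a \<in> L1" "a \<noteq> U" using xy by blast
      obtain x' y' where xy': "x' \<in> L2" "y' \<in> L2" "x' \<noteq> y'" using r2 unfolding rep_def by (blast elim: two_ptsE)
      obtain b where b: "b \<in> L2" "b \<noteq> U" using xy' by blast
      note ra = rep_pts[OF r1 a(1)] and rb = rep_pts[OF r2 b(1)]
      have aU: "a \<inter> U = H1"
        by (rule meet_eq[OF ra(2) u1(1) h1(1), of "k - 1"]) (use ra u1 h1 a k1 in auto)
      have bU: "b \<inter> U = H2"
        by (rule meet_eq[OF rb(2) u2(1) h2(1), of "k - 1"]) (use rb u2 h2 b k1 in auto)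
      have abne: "a \<noteq> b" using aU bU Hne by auto
      have adj: "Suc (ldim (a \<inter> b)) = k" using pcollD(2)[OF pc _ _ abne] a(1) b(1) L1'(3) L2'(3) by blast
      have BU: "B1 \<inter> B2 = U"
        by (rule meet_eq[OF h1(3) h2(3) u1(1), of k]) (use h1 h2 Bne u1 u2 in auto)
      have "a \<inter> b \<subseteq> H1 \<inter> H2" using ra(5) rb(5) BU aU bU by blast
      hence "ldim (a \<inter> b) \<le> ldim (H1 \<inter> H2)" using ldim_mono'[OF lsub_Int[OF h1(1) h2(1)]] by blast
      moreover have "Suc (ldim (H1 \<inter> H2)) \<le> k - 1" using inter_lt[OF h1(1) h2(1)] h1(2) h2(2) Hne by simp
      ultimately show ?thesis using adj k1 by simp
    qed
  qed
qed

lemma closure_sup: "X \<subseteq> grass_closure n k X"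
  unfolding grass_closure_def by blast

lemma sb_case:
  assumes K: "max_pi_clique n k W m K" and pc: "pcoll C0" and sub: "\<And>L. L \<in> K \<Longrightarrow> L \<subseteq> C0"
    and U: "\<And>L. L \<in> K \<Longrightarrow> U \<in> pencil_of n k L" and ne: "K \<noteq> {} \<or> U \<in> C0"
  shows "\<exists>X U. max_strong_subspace n k W m X \<and> U \<in> grass_closure n k X \<and> K = semibundle n k W m U X"
proof -
  obtain X where X: "C0 \<subseteq> X" "pcoll X" "\<forall>Y. pcoll Y \<and> X \<subseteq> Y \<longrightarrow> Y = X" using zorn_pcoll[OF pc] by blast
  have ms: "max_strong_subspace n k W m X" by (rule max_pcoll_strong[OF X(2,3)])
  have Kcl: "pi_clique n k W m K" and Kmax: "\<And>K'. pi_clique n k W m K' \<Longrightarrow> K \<subseteq> K' \<Longrightarrow> K' = K"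
    using K unfolding max_pi_clique_def by auto
  have KL: "K \<subseteq> slines n k W m" using Kcl unfolding pi_clique_def by blast
  have Ucl: "U \<in> grass_closure n k X"
  proof (cases "K = {}")
    case True
    hence "U \<in> X" using ne X(1) by blast
    thus ?thesis using closure_sup by blast
  next
    case False
    then obtain L where L: "L \<in> K" by blast
    obtain H B where r: "rep L H B" using KL L slines_rep by blast
    have "pencil n k H B \<subseteq> grass_closure n k X" using pencil_in_closure[OF r] sub[OF L] X(1) by blast
    thus ?thesis using U[OF L] pencil_of_rep[OF r] by blast
  qed
  have "K \<subseteq> semibundle n k W m U X" unfolding semibundle_def using KL U sub X(1) by blast
  hence "semibundle n k W m U X = K" using Kmax sb_clique[OF X(2)] by blast
  thus ?thesis using ms Ucl by blast
qed

lemma clique_rel: "pi_clique n k W m K \<Longrightarrow> L \<in> K \<Longrightarrow> L' \<in> K \<Longrightarrow> L \<noteq> L' \<Longrightarrow> pi_rel n k W m L L'"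
  unfolding pi_clique_def by blast

lemma clique_rep: "pi_clique n k W m K \<Longrightarrow> L \<in> K \<Longrightarrow> \<exists>H B. rep L H B"
  unfolding pi_clique_def using slines_rep by blast

lemma all_H:
  assumes Kc: "pi_clique n k W m K" and L: "L1 \<in> K" "L2 \<in> K" "L1 \<noteq> L2"
    and r1: "rep L1 H B1" and r2: "rep L2 H B2" and L3: "L3 \<in> K" and r3: "rep L3 H3 B3"
  shows "H3 = H"
proof (rule ccontr)
  assume ne: "H3 \<noteq> H"
  have "L3 \<noteq> L1" using ne rep_unique(1)[OF r1] r3 by blast
  have "L3 \<noteq> L2" using ne rep_unique(1)[OF r2] r3 by blast
  have "B1 = B3" using pi_share[OF r1 r3 _ clique_rel[OF Kc L(1) L3]] \<open>L3 \<noteq> L1\<close> ne by auto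
  moreover have "B2 = B3" using pi_share[OF r2 r3 _ clique_rel[OF Kc L(2) L3]] \<open>L3 \<noteq> L2\<close> ne by auto
  ultimately have "L1 = L2" using rep_eq[OF r1] r2 by simp
  thus False using L(3) by simp
qed

lemma all_B:
  assumes Kc: "pi_clique n k W m K" and L: "L1 \<in> K" "L2 \<in> K" "L1 \<noteq> L2"
    and r1: "rep L1 H1 B" and r2: "rep L2 H2 B" and L3: "L3 \<in> K" and r3: "rep L3 H3 B3"
  shows "B3 = B"
proof (rule ccontr)
  assume ne: "B3 \<noteq> B"
  have "L3 \<noteq> L1" using ne rep_unique(2)[OF r1] r3 by blast
  have "L3 \<noteq> L2" using ne rep_unique(2)[OF r2] r3 by blast
  have "H1 = H3" using pi_share[OF r1 r3 _ clique_rel[OF Kc L(1) L3]] \<open>L3 \<noteq> L1\<close> ne by auto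
  moreover have "H2 = H3" using pi_share[OF r2 r3 _ clique_rel[OF Kc L(2) L3]] \<open>L3 \<noteq> L2\<close> ne by auto
  ultimately have "L1 = L2" using r1 r2 unfolding rep_def by simp
  thus False using L(3) by simp
qed

lemma meetB:
  assumes Kc: "pi_clique n k W m K" and L: "L \<in> K" "L' \<in> K" and r: "rep L H B" and r': "rep L' H B'"
    and ne: "B \<noteq> B'"
  shows "ldim (B \<inter> B') = k"
proof -
  have "L \<noteq> L'" using ne rep_unique(2)[OF r] r' by blast
  then obtain Z where Z: "lsubspace n Z" "ldim Z = k + 2" "B \<subseteq> Z" "B' \<subseteq> Z"
    using pi_share[OF r r' _ clique_rel[OF Kc L]] ne by blast
  have "Suc (ldim (B \<inter> B')) = Suc k"
    by (rule dim_hyp[OF rep_HB(3)[OF r] rep_HB(3)[OF r'] Z(1)]) (use rep_HB(4)[OF r] rep_HB(4)[OF r'] ne Z in auto)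
  thus ?thesis by simp
qed

lemma joinH:
  assumes Kc: "pi_clique n k W m K" and L: "L \<in> K" "L' \<in> K" and r: "rep L H B" and r': "rep L' H' B"
    and ne: "H \<noteq> H'"
  shows "ldim (H \<inter> H') = k - 2" "ldim (ssum H H') = k"
proof -
  have "L \<noteq> L'" using ne rep_unique(1)[OF r] r' by blast
  then obtain Y where Y: "lsubspace n Y" "ldim Y = k - 2" "Y \<subseteq> H" "Y \<subseteq> H'"
    using pi_share[OF r r' _ clique_rel[OF Kc L]] ne by blast
  have I: "lsubspace n (H \<inter> H')" using lsub_Int[OF rep_HB(1)[OF r] rep_HB(1)[OF r']] .
  have "k - 2 \<le> ldim (H \<inter> H')" using ldim_mono'[OF I, of Y] Y by auto
  moreover have "Suc (ldim (H \<inter> H')) \<le> k - 1"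
    using inter_lt[OF rep_HB(1)[OF r] rep_HB(1)[OF r']] rep_HB(2)[OF r] rep_HB(2)[OF r'] ne by simp
  ultimately show d: "ldim (H \<inter> H') = k - 2" using k1 by simp
  have "ldim (ssum H H') = Suc (k - 1)"
    by (rule dim_adj[OF rep_HB(1)[OF r] rep_HB(1)[OF r']]) (use rep_HB(2)[OF r] rep_HB(2)[OF r'] d k1 in auto)
  thus "ldim (ssum H H') = k" using k1 by simp
qed

lemma flat_H:
  assumes K: "max_pi_clique n k W m K" and L: "L1 \<in> K" "L2 \<in> K" "L1 \<noteq> L2"
    and r1: "rep L1 H B1" and r2: "rep L2 H B2"
    and noU: "\<And>U. \<exists>L\<in>K. U \<notin> pencil_of n k L"
  shows "\<exists>E. spine_plane n k W m E \<and> K = flat n k W m E"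
proof -
  have Kc: "pi_clique n k W m K" and Kmax: "\<And>K'. pi_clique n k W m K' \<Longrightarrow> K \<subseteq> K' \<Longrightarrow> K' = K"
    using K unfolding max_pi_clique_def by auto
  have allH: "H' = H" if "L \<in> K" "rep L H' B'" for L H' B' using all_H[OF Kc L r1 r2 that] .
  have Bne: "B1 \<noteq> B2" using L(3) rep_eq[OF r1] r2 by blast
  obtain Z where Z: "lsubspace n Z" "ldim Z = k + 2" "B1 \<subseteq> Z" "B2 \<subseteq> Z"
    using pi_share[OF r1 r2 L(3) clique_rel[OF Kc L]] Bne by blast
  note h1 = rep_HB[OF r1] and h2 = rep_HB[OF r2]
  define U0 where "U0 = B1 \<inter> B2"
  have U0: "lsubspace n U0" "ldim U0 = k" "H \<subseteq> U0" "U0 \<subseteq> B1" "U0 \<subseteq> B2"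
    using lsub_Int[OF h1(3) h2(3)] meetB[OF Kc L(1,2) r1 r2 Bne] h1(5) h2(5) unfolding U0_def by auto
  obtain L3 where L3: "L3 \<in> K" "U0 \<notin> pencil_of n k L3" using noU by blast
  obtain H3 B3 where r3': "rep L3 H3 B3" using clique_rep[OF Kc L3(1)] by blast
  have "H3 = H" using allH[OF L3(1) r3'] .
  hence r3: "rep L3 H B3" using r3' by simp
  note h3 = rep_HB[OF r3]
  have U0B3: "\<not> U0 \<subseteq> B3" using L3(2) pencil_of_rep[OF r3] U0 by (auto simp: pencil_iff Sub_iff)
  have B31: "B3 \<noteq> B1" and B32: "B3 \<noteq> B2" using U0B3 U0 by auto
  define p1 where "p1 = B3 \<inter> B1"
  define p2 where "p2 = B3 \<inter> B2"
  have p1: "lsubspace n p1" "ldim p1 = k" using lsub_Int[OF h3(3) h1(3)] meetB[OF Kc L3(1) L(1) r3 r1 B31] unfolding p1_def by auto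
  have p2: "lsubspace n p2" "ldim p2 = k" using lsub_Int[OF h3(3) h2(3)] meetB[OF Kc L3(1) L(2) r3 r2 B32] unfolding p2_def by auto
  have p1U0: "p1 \<noteq> U0"
  proof
    assume "p1 = U0" hence "U0 \<subseteq> B3" unfolding p1_def by blast
    thus False using U0B3 by simp
  qed
  have p12: "p1 \<noteq> p2"
  proof
    assume "p1 = p2"
    hence "p1 \<subseteq> U0" unfolding p1_def p2_def U0_def by blast
    hence "p1 = U0" using ldim_eq[OF p1(1) U0(1)] p1 U0 by simp
    thus False using p1U0 by simp
  qed
  have "ssum p1 p2 = B3"
    by (rule join_eq[OF p1(1) p2(1) h3(3), of k]) (use p1 p2 p12 h3 in \<open>auto simp: p1_def p2_def\<close>)
  moreover have "ssum p1 p2 \<subseteq> Z" by (rule ssum_sub[OF Z(1)]) (use Z in \<open>auto simp: p1_def p2_def\<close>)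
  ultimately have B3Z: "B3 \<subseteq> Z" by simp
  have allZ: "B' \<subseteq> Z" if LK: "L \<in> K" and r': "rep L H' B'" for L H' B'
  proof -
    have "H' = H" using allH[OF LK r'] .
    hence r: "rep L H B'" using r' by simp
    note h = rep_HB[OF r]
    show ?thesis
    proof (cases "B' = B1 \<or> B' = B2 \<or> B' = B3")
      case True thus ?thesis using Z B3Z by auto
    next
      case False
      hence n1: "B' \<noteq> B1" and n2: "B' \<noteq> B2" and n3: "B' \<noteq> B3" by auto
      define q where "q = B' \<inter> B3"
      define r1' where "r1' = B' \<inter> B1"
      define r2' where "r2' = B' \<inter> B2"
      have q: "lsubspace n q" "ldim q = k" "q \<subseteq> Z"
        using lsub_Int[OF h(3) h3(3)] meetB[OF Kc LK L3(1) r r3 n3] B3Z unfolding q_def by auto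
      have qr1: "lsubspace n r1'" "ldim r1' = k" "r1' \<subseteq> Z"
        using lsub_Int[OF h(3) h1(3)] meetB[OF Kc LK L(1) r r1 n1] Z unfolding r1'_def by auto
      have qr2: "lsubspace n r2'" "ldim r2' = k" "r2' \<subseteq> Z"
        using lsub_Int[OF h(3) h2(3)] meetB[OF Kc LK L(2) r r2 n2] Z unfolding r2'_def by auto
      have hlp: "B' \<subseteq> Z" if c: "lsubspace n c" "ldim c = k" "c \<subseteq> B'" "c \<subseteq> Z"
          and d: "lsubspace n d" "ldim d = k" "d \<subseteq> B'" "d \<subseteq> Z" and cd: "c \<noteq> d" for c d
      proof -
        have "ssum c d = B'" by (rule join_eq[OF c(1) d(1) h(3), of k]) (use c d cd h in auto)
        moreover have "ssum c d \<subseteq> Z" using ssum_sub[OF Z(1) c(4) d(4)] .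
        ultimately show ?thesis by simp
      qed
      show ?thesis
      proof (cases "q = r1'")
        case False thus ?thesis using hlp[OF q(1,2) _ q(3) qr1(1,2) _ qr1(3)] unfolding q_def r1'_def by blast
      next
        case True
        hence "q \<subseteq> p1" unfolding q_def r1'_def p1_def by blast
        hence qp1: "q = p1" using ldim_eq[OF q(1) p1(1)] q p1 by simp
        show ?thesis
        proof (cases "q = r2'")
          case False thus ?thesis using hlp[OF q(1,2) _ q(3) qr2(1,2) _ qr2(3)] unfolding q_def r2'_def by blast
        next
          case True
          hence "p1 \<subseteq> U0" using qp1 unfolding q_def r2'_def p1_def U0_def by blast
          hence "p1 = U0" using ldim_eq[OF p1(1) U0(1)] p1 U0 by simp
          thus ?thesis using p1U0 by simp
        qed
      qed
    qed
  qed
  have HZ: "H \<subseteq> Z" using h1(5) Z(3) by blast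
  have dims: "(ldim H = k - 2 \<and> ldim Z = k + 1) \<or> (ldim H = k - 1 \<and> ldim Z = k + 2)" using h1(2) Z(2) by simp
  note mp = mk_plane[OF h1(1) Z(1) HZ dims r1 r2 L(3) order_refl order_refl Z(3) Z(4)]
  define E where "E = {U \<in> Sub n k. H \<subseteq> U \<and> U \<subseteq> Z} \<inter> Pt"
  have spE: "spine_plane n k W m E" using mp(1) unfolding E_def .
  have "K \<subseteq> flat n k W m E"
  proof
    fix L assume LK: "L \<in> K"
    obtain H' B' where r: "rep L H' B'" using clique_rep[OF Kc LK] by blast
    have "H' = H" using allH[OF LK r] .
    hence "L \<subseteq> E" using mp(2)[OF r _ allZ[OF LK r]] unfolding E_def by simp
    moreover have "L \<in> slines n k W m" using r slines_rep by blast
    ultimately show "L \<in> flat n k W m E" unfolding flat_def by blast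
  qed
  hence "flat n k W m E = K" using Kmax flat_clique[OF spE] by blast
  thus ?thesis using spE by blast
qed

lemma flat_B:
  assumes K: "max_pi_clique n k W m K" and L: "L1 \<in> K" "L2 \<in> K" "L1 \<noteq> L2"
    and r1: "rep L1 H1 B" and r2: "rep L2 H2 B"
    and noU: "\<And>U. \<exists>L\<in>K. U \<notin> pencil_of n k L"
  shows "\<exists>E. spine_plane n k W m E \<and> K = flat n k W m E"
proof -
  have Kc: "pi_clique n k W m K" and Kmax: "\<And>K'. pi_clique n k W m K' \<Longrightarrow> K \<subseteq> K' \<Longrightarrow> K' = K"
    using K unfolding max_pi_clique_def by auto
  have allB: "B' = B" if "L \<in> K" "rep L H' B'" for L H' B' using all_B[OF Kc L r1 r2 that] .
  have Hne: "H1 \<noteq> H2" using L(3) r1 r2 unfolding rep_def by auto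
  note h1 = rep_HB[OF r1] and h2 = rep_HB[OF r2]
  define Y0 where "Y0 = H1 \<inter> H2"
  define U0 where "U0 = ssum H1 H2"
  have Y0: "lsubspace n Y0" "ldim Y0 = k - 2" "Y0 \<subseteq> H1" "Y0 \<subseteq> H2"
    using lsub_Int[OF h1(1) h2(1)] joinH[OF Kc L(1,2) r1 r2 Hne] unfolding Y0_def by auto
  have U0: "lsubspace n U0" "ldim U0 = k" "H1 \<subseteq> U0" "H2 \<subseteq> U0" "U0 \<subseteq> B"
    using lsub_ssum[OF h1(1) h2(1)] joinH[OF Kc L(1,2) r1 r2 Hne] ssum_left[OF h2(1)] ssum_right[OF h1(1)]
      ssum_sub[OF h1(3) h1(5) h2(5)] unfolding U0_def by auto
  obtain L3 where L3: "L3 \<in> K" "U0 \<notin> pencil_of n k L3" using noU by blast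
  obtain H3 B3 where r3': "rep L3 H3 B3" using clique_rep[OF Kc L3(1)] by blast
  have "B3 = B" using allB[OF L3(1) r3'] .
  hence r3: "rep L3 H3 B" using r3' by simp
  note h3 = rep_HB[OF r3]
  have H3U0: "\<not> H3 \<subseteq> U0" using L3(2) pencil_of_rep[OF r3] U0 by (auto simp: pencil_iff Sub_iff)
  have H31: "H3 \<noteq> H1" and H32: "H3 \<noteq> H2" using H3U0 U0 by auto
  define p1 where "p1 = ssum H3 H1"
  define p2 where "p2 = ssum H3 H2"
  have p1: "lsubspace n p1" "ldim p1 = k" "H3 \<subseteq> p1" "H1 \<subseteq> p1"
    using lsub_ssum[OF h3(1) h1(1)] joinH(2)[OF Kc L3(1) L(1) r3 r1 H31] ssum_left[OF h1(1)] ssum_right[OF h3(1)]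
    unfolding p1_def by auto
  have p2: "lsubspace n p2" "ldim p2 = k" "H3 \<subseteq> p2" "H2 \<subseteq> p2"
    using lsub_ssum[OF h3(1) h2(1)] joinH(2)[OF Kc L3(1) L(2) r3 r2 H32] ssum_left[OF h2(1)] ssum_right[OF h3(1)]
    unfolding p2_def by auto
  have p1U0: "p1 \<noteq> U0" using p1(3) H3U0 by auto
  have p12: "p1 \<noteq> p2"
  proof
    assume "p1 = p2"
    hence "U0 \<subseteq> p1" unfolding U0_def using ssum_sub[OF p1(1) p1(4)] p2(4) by simp
    hence "U0 = p1" using ldim_eq[OF U0(1) p1(1)] p1 U0 by simp
    thus False using p1U0 by simp
  qed
  have "p1 \<inter> p2 = H3"
    by (rule meet_eq[OF p1(1) p2(1) h3(1), of "k - 1"]) (use p1 p2 p12 h3 k1 in auto)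
  hence Y0H3: "Y0 \<subseteq> H3" using Y0 p1 p2 by blast
  have allY: "Y0 \<subseteq> H'" if LK: "L \<in> K" and r': "rep L H' B'" for L H' B'
  proof -
    have "B' = B" using allB[OF LK r'] .
    hence r: "rep L H' B" using r' by simp
    note h = rep_HB[OF r]
    show ?thesis
    proof (cases "H' = H1 \<or> H' = H2 \<or> H' = H3")
      case True thus ?thesis using Y0 Y0H3 by auto
    next
      case False
      hence n1: "H' \<noteq> H1" and n2: "H' \<noteq> H2" and n3: "H' \<noteq> H3" by auto
      define q where "q = ssum H' H3"
      define r1' where "r1' = ssum H' H1"
      define r2' where "r2' = ssum H' H2"
      have q: "lsubspace n q" "ldim q = k" "H' \<subseteq> q" "H3 \<subseteq> q"
        using lsub_ssum[OF h(1) h3(1)] joinH(2)[OF Kc LK L3(1) r r3 n3] ssum_left[OF h3(1)] ssum_right[OF h(1)]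
        unfolding q_def by auto
      have qr1: "lsubspace n r1'" "ldim r1' = k" "H' \<subseteq> r1'" "H1 \<subseteq> r1'"
        using lsub_ssum[OF h(1) h1(1)] joinH(2)[OF Kc LK L(1) r r1 n1] ssum_left[OF h1(1)] ssum_right[OF h(1)]
        unfolding r1'_def by auto
      have qr2: "lsubspace n r2'" "ldim r2' = k" "H' \<subseteq> r2'" "H2 \<subseteq> r2'"
        using lsub_ssum[OF h(1) h2(1)] joinH(2)[OF Kc LK L(2) r r2 n2] ssum_left[OF h2(1)] ssum_right[OF h(1)]
        unfolding r2'_def by auto
      have hlp: "c \<inter> d = H'" if c: "lsubspace n c" "ldim c = k" "H' \<subseteq> c"
          and d: "lsubspace n d" "ldim d = k" "H' \<subseteq> d" and cd: "c \<noteq> d" for c d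
        by (rule meet_eq[OF c(1) d(1) h(1), of "k - 1"]) (use c d cd h k1 in auto)
      show ?thesis
      proof (cases "q = r1'")
        case False
        have "q \<inter> r1' = H'" using hlp[OF q(1,2,3) qr1(1,2,3) False] .
        thus ?thesis using Y0H3 Y0(3) q(4) qr1(4) by blast
      next
        case True
        have "p1 \<subseteq> q" unfolding p1_def using ssum_sub[OF q(1) q(4)] qr1(4) True by simp
        hence qp1: "p1 = q" using ldim_eq[OF p1(1) q(1)] q p1 by simp
        show ?thesis
        proof (cases "q = r2'")
          case False
          have "q \<inter> r2' = H'" using hlp[OF q(1,2,3) qr2(1,2,3) False] .
          thus ?thesis using Y0H3 Y0(4) q(4) qr2(4) by blast
        next
          case True
          have "H2 \<subseteq> p1" using qr2(4) True qp1 by simp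
          hence "U0 \<subseteq> p1" unfolding U0_def using ssum_sub[OF p1(1) p1(4)] by simp
          hence "U0 = p1" using ldim_eq[OF U0(1) p1(1)] p1 U0 by simp
          thus ?thesis using p1U0 by simp
        qed
      qed
    qed
  qed
  have YB: "Y0 \<subseteq> B" using Y0(3) h1(5) by blast
  have dims: "(ldim Y0 = k - 2 \<and> ldim B = k + 1) \<or> (ldim Y0 = k - 1 \<and> ldim B = k + 2)" using Y0(2) h1(4) by simp
  note mp = mk_plane[OF Y0(1) h1(3) YB dims r1 r2 L(3) Y0(3) Y0(4) order_refl order_refl]
  define E where "E = {U \<in> Sub n k. Y0 \<subseteq> U \<and> U \<subseteq> B} \<inter> Pt"
  have spE: "spine_plane n k W m E" using mp(1) unfolding E_def .
  have "K \<subseteq> flat n k W m E"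
  proof
    fix L assume LK: "L \<in> K"
    obtain H' B' where r: "rep L H' B'" using clique_rep[OF Kc LK] by blast
    have "B' = B" using allB[OF LK r] .
    hence "L \<subseteq> E" using mp(2)[OF r allY[OF LK r]] unfolding E_def by simp
    moreover have "L \<in> slines n k W m" using r slines_rep by blast
    ultimately show "L \<in> flat n k W m E" unfolding flat_def by blast
  qed
  hence "flat n k W m E = K" using Kmax flat_clique[OF spE] by blast
  thus ?thesis using spE by blast
qed

lemma main_ctx:
  assumes K: "max_pi_clique n k W m K" and pt: "\<exists>P0. P0 \<in> Pt"
  shows "(\<exists>E. spine_plane n k W m E \<and> K = flat n k W m E) \<or>
         (\<exists>X U. max_strong_subspace n k W m X \<and> U \<in> grass_closure n k X \<and>
                K = semibundle n k W m U X)"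
proof -
  have Kc: "pi_clique n k W m K" using K unfolding max_pi_clique_def by auto
  show ?thesis
  proof (cases "K = {}")
    case True
    obtain P0 where P0: "P0 \<in> Pt" using pt by blast
    have "pcoll {P0}" unfolding pcoll_def using P0 by auto
    from sb_case[OF K this] show ?thesis using True by auto
  next
    case False
    then obtain L1 where L1: "L1 \<in> K" by blast
    obtain H1 B1 where r1: "rep L1 H1 B1" using clique_rep[OF Kc L1] by blast
    show ?thesis
    proof (cases "K = {L1}")
      case True
      have pc: "pcoll L1" unfolding pcoll_def using rep_pts(1)[OF r1] line_coll[OF r1] by blast
      obtain x y where xy: "x \<in> L1" "y \<in> L1" "x \<noteq> y" using r1 unfolding rep_def by (blast elim: two_ptsE)
      have "x \<in> pencil_of n k L1" using pencil_of_rep[OF r1] xy(1) r1 unfolding rep_def by blast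
      hence "\<And>L. L \<in> K \<Longrightarrow> x \<in> pencil_of n k L" using True by blast
      from sb_case[OF K pc _ this] show ?thesis using True xy by auto
    next
      case False
      then obtain L2 where L2: "L2 \<in> K" "L2 \<noteq> L1" using L1 by blast
      obtain H2 B2 where r2: "rep L2 H2 B2" using clique_rep[OF Kc L2(1)] by blast
      have L12: "L1 \<in> K" "L2 \<in> K" "L1 \<noteq> L2" using L1 L2 by auto
      have sh: "H1 = H2 \<or> B1 = B2" using pi_share[OF r1 r2 L12(3) clique_rel[OF Kc L12]] by blast
      have pcU: "pcoll (\<Union>K)"
        unfolding pcoll_def
      proof (intro conjI ballI impI)
        show "\<Union>K \<subseteq> Pt"
        proof
          fix x assume "x \<in> \<Union>K"
          then obtain L where "L \<in> K" "x \<in> L" by blast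
          moreover obtain H B where "rep L H B" using clique_rep[OF Kc \<open>L \<in> K\<close>] by blast
          ultimately show "x \<in> Pt" using rep_pts(1) by blast
        qed
        fix a b assume a: "a \<in> \<Union>K" and b: "b \<in> \<Union>K" and ab: "a \<noteq> b"
        obtain La where La: "La \<in> K" "a \<in> La" using a by blast
        obtain Lb where Lb: "Lb \<in> K" "b \<in> Lb" using b by blast
        obtain Ha Ba where ra: "rep La Ha Ba" using clique_rep[OF Kc La(1)] by blast
        obtain Hb Bb where rb: "rep Lb Hb Bb" using clique_rep[OF Kc Lb(1)] by blast
        note pa = rep_pts[OF ra La(2)] and pb = rep_pts[OF rb Lb(2)]
        show "Suc (ldim (a \<inter> b)) = k"
        proof (cases "H1 = H2")
          case True
          have "Ha = H1" "Hb = H1" using all_H[OF Kc L12 r1 _ La(1) ra] all_H[OF Kc L12 r1 _ Lb(1) rb] r2 True by auto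
          hence "a \<inter> b = H1"
            using meet_eq[OF pa(2) pb(2) rep_HB(1)[OF r1], of "k - 1"] pa pb ab rep_HB(2)[OF r1] k1 by auto
          thus ?thesis using rep_HB(2)[OF r1] k1 by simp
        next
          case False
          hence BB: "B1 = B2" using sh by simp
          have "Ba = B1" "Bb = B1" using all_B[OF Kc L12 r1 _ La(1) ra] all_B[OF Kc L12 r1 _ Lb(1) rb] r2 BB by auto
          thus ?thesis
            using dim_hyp[OF pa(2) pb(2) rep_HB(3)[OF r1]] pa pb ab rep_HB(4)[OF r1] by auto
        qed
      qed
      show ?thesis
      proof (cases "\<exists>U. \<forall>L\<in>K. U \<in> pencil_of n k L")
        case True
        then obtain U where U: "\<And>L. L \<in> K \<Longrightarrow> U \<in> pencil_of n k L" by blast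
        from sb_case[OF K pcU _ U] show ?thesis using L1 by blast
      next
        case noU: False
        hence noU': "\<And>U. \<exists>L\<in>K. U \<notin> pencil_of n k L" by blast
        show ?thesis
        proof (cases "H1 = H2")
          case True
          from flat_H[OF K L12 r1 _ noU'] r2 True show ?thesis by blast
        next
          case False
          hence "B1 = B2" using sh by simp
          from flat_B[OF K L12 r1 _ noU'] r2 this show ?thesis by blast
        qed
      qed
    qed
  qed
qed

end

lemma lsub_zero: "lsubspace n {0}" unfolding lsubspace_def vecs_def by auto

lemma ldim_zero: "ldim ({0} :: (nat \<Rightarrow> 'a::division_ring) set) = 0"
  using ldim_bound[of "{0::nat\<Rightarrow>'a}" 0 0] ibound_zero by (simp add: vecs_def)

lemma exists_sub_dim:
  assumes W: "lsubspace n W" shows "j \<le> ldim W \<Longrightarrow> \<exists>A. lsubspace n A \<and> A \<subseteq> W \<and> ldim A = j"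
proof (induction j)
  case 0 thus ?case using lsub_zero ldim_zero lsubD(2)[OF W] by blast
next
  case (Suc j)
  then obtain A where A: "lsubspace n A" "A \<subseteq> W" "ldim A = j" by auto
  have "A \<noteq> W" using A Suc.prems by auto
  then obtain x where x: "x \<in> W" "x \<notin> A" using A(2) by blast
  have xv: "x \<in> vecs n" using sub_vec[OF W x(1)] .
  have A': "lsubspace n (ssum A (sp1 x))" using lsub_ssum[OF A(1) lsub_sp1[OF xv]] .
  have "ssum A (sp1 x) \<subseteq> W" using ssum_sub[OF W A(2) sp1_sub[OF W x(1)]] .
  moreover have "ldim (ssum A (sp1 x)) = Suc j"
  proof -
    have "A \<noteq> ssum A (sp1 x)" using ssum_right[OF A(1), of "sp1 x"] sp1_self[of x] x(2) by blast
    hence "Suc j \<le> ldim (ssum A (sp1 x))" using ldim_strict'[OF A(1) A' ssum_left[OF lsub_sp1[OF xv]]] A(3) by simp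
    thus ?thesis using ldim_step[OF A(1) xv] A(3) by simp
  qed
  ultimately show ?case using A' by blast
qed

lemma extend_pt:
  assumes W: "lsubspace n W" and U0: "lsubspace n U0" "U0 \<subseteq> W" "ldim U0 = m"
    and kw: "k + ldim W \<le> n + m"
  shows "m + i \<le> k \<Longrightarrow> \<exists>U. lsubspace n U \<and> ldim U = m + i \<and> U \<inter> W = U0 \<and> ldim (ssum U W) + m \<le> ldim W + (m + i)"
proof (induction i)
  case 0
  have "ssum U0 W \<subseteq> W" using ssum_sub[OF W U0(2) order_refl] .
  hence "ldim (ssum U0 W) \<le> ldim W" using ldim_mono'[OF W] by blast
  moreover have "U0 \<inter> W = U0" using U0(2) by blast
  ultimately show ?case using U0 by auto
next
  case (Suc i)
  then obtain U where U: "lsubspace n U" "ldim U = m + i" "U \<inter> W = U0" "ldim (ssum U W) + m \<le> ldim W + (m + i)" by auto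
  have S: "lsubspace n (ssum U W)" using lsub_ssum[OF U(1) W] .
  have "ldim (ssum U W) < n" using U(4) Suc.prems kw by simp
  moreover have "ldim (vecs n :: (nat \<Rightarrow> 'a) set) = n" by (rule ldim_vecs)
  ultimately have "ssum U W \<noteq> vecs n" by auto
  then obtain x where x: "x \<in> vecs n" "x \<notin> ssum U W" using lsubD(1)[OF S] by blast
  have xU: "x \<notin> U" using x(2) ssum_left[OF W, of U] by blast
  define U' where "U' = ssum U (sp1 x)"
  have U': "lsubspace n U'" unfolding U'_def using lsub_ssum[OF U(1) lsub_sp1[OF x(1)]] .
  have dU': "ldim U' = m + Suc i"
  proof -
    have "U \<noteq> U'" using ssum_right[OF U(1), of "sp1 x"] sp1_self[of x] xU unfolding U'_def by blast
    moreover have "U \<subseteq> U'" unfolding U'_def by (rule ssum_left[OF lsub_sp1[OF x(1)]])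
    ultimately have "Suc (m + i) \<le> ldim U'" using ldim_strict'[OF U(1) U'] U(2) by simp
    thus ?thesis using ldim_step[OF U(1) x(1)] U(2) unfolding U'_def by simp
  qed
  have int: "U' \<inter> W = U0"
  proof
    show "U0 \<subseteq> U' \<inter> W" using U(3) ssum_left[OF lsub_sp1[OF x(1)], of U] unfolding U'_def by blast
    show "U' \<inter> W \<subseteq> U0"
    proof
      fix z assume z: "z \<in> U' \<inter> W"
      then obtain u f where zu: "z = u + f" "u \<in> U" "f \<in> sp1 x" unfolding U'_def by (blast elim: ssumE)
      then obtain t where ft: "f = smult t x" unfolding sp1_def by blast
      show "z \<in> U0"
      proof (cases "t = 0")
        case True
        hence "z = u" using zu ft by simp
        thus ?thesis using zu(2) z U(3) by blast
      next
        case False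
        have h: "inverse t * (t * y) = y" for y using False by (simp add: mult.assoc[symmetric])
        have "x = - smult (inverse t) u + smult (inverse t) z"
          using zu ft by (simp add: fun_eq_iff algebra_simps h)
        moreover have "- smult (inverse t) u \<in> U" using lsub_neg[OF U(1) lsubD(4)[OF U(1) zu(2)]] .
        moreover have "smult (inverse t) z \<in> W" using lsubD(4)[OF W] z by blast
        ultimately have "x \<in> ssum U W" using ssumI by metis
        thus ?thesis using x(2) by simp
      qed
    qed
  qed
  have T: "lsubspace n (ssum (ssum U W) (sp1 x))" using lsub_ssum[OF S lsub_sp1[OF x(1)]] .
  have "ssum U' W \<subseteq> ssum (ssum U W) (sp1 x)"
  proof (rule ssum_sub[OF T])
    show "U' \<subseteq> ssum (ssum U W) (sp1 x)" unfolding U'_def by (rule ssum_mono[OF ssum_left[OF W] order_refl])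
    show "W \<subseteq> ssum (ssum U W) (sp1 x)" using ssum_right[OF U(1), of W] ssum_left[OF lsub_sp1[OF x(1)], of "ssum U W"] by blast
  qed
  hence "ldim (ssum U' W) \<le> Suc (ldim (ssum U W))" using ldim_mono'[OF T] ldim_step[OF S x(1)] by (meson le_trans)
  hence "ldim (ssum U' W) + m \<le> ldim W + (m + Suc i)" using U(4) by simp
  thus ?case using U' dU' int by blast
qed

lemma exists_pt:
  assumes W: "lsubspace n W" and kw: "k + ldim W \<le> n + m" and mk: "m \<le> k" and mw: "m \<le> ldim W"
  shows "\<exists>U. U \<in> spoints n k W m"
proof -
  obtain U0 where U0: "lsubspace n U0" "U0 \<subseteq> W" "ldim U0 = m" using exists_sub_dim[OF W mw] by blast
  obtain U where U: "lsubspace n U" "ldim U = m + (k - m)" "U \<inter> W = U0"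
    using extend_pt[OF W U0 kw, of "k - m"] mk by auto
  have "U \<in> spoints n k W m" unfolding spoints_def Sub_def using U U0 mk by simp
  thus ?thesis by blast
qed

theorem proposition2p2:
  fixes n k m :: nat and W :: "(nat \<Rightarrow> 'a::division_ring) set"
    and K :: "(nat \<Rightarrow> 'a) set set set"
  assumes "n \<ge> 3"
    and "1 < k" and "k < n - 1"
    and "lsubspace n W"
    and "int k - (int n - int (ldim W)) \<le> int m" and "m \<le> min k (ldim W)"
    and "max_pi_clique n k W m K"
  shows "(\<exists>E. spine_plane n k W m E \<and> K = flat n k W m E) \<or>
         (\<exists>X U. max_strong_subspace n k W m X \<and> U \<in> grass_closure n k X \<and>
                K = semibundle n k W m U X)"
proof -
  have kw: "k + ldim W \<le> n + m" using assms(5) by linarith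
  have "\<exists>U. U \<in> spoints n k W m" using exists_pt[OF assms(4) kw] assms(6) by simp
  thus ?thesis using main_ctx[OF assms(2) assms(7)] by blast
qed

end
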